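(* Let $\mathbf{k}$ be an algebraically closed field of prime characteristic $p$, and let $R(p)$ be the Radford algebra over $\mathbf{k}$. Then for every positive integer $n$, the $n$-th higher Frobenius–Schur indicator of $R(p)$ is \[ \nu_n(R(p))=\begin{cases} 1 & \text{if } n\not\equiv 0 \pmod p,\\ 0 & \text{if } n\equiv 0 \pmod p.\end{cases} \]
   Context: The Radford algebra $R(p)$ is the Hopf algebra over $\mathbf{k}$ generated as an algebra by $g,x$ subject to the relations $g^p=1$, $x^p=x$, $gx-xg=g^2-g$ if $p>2$, and $g^2=1$, $x^2=x$, $gx-xg=1-g$ if $p=2$; its coalgebra structure is given by $\Delta(g)=g\otimes g$, $\Delta(x)=x\otimes 1+g\otimes x$, $\varepsilon(g)=1$, $\varepsilon(x)=0$. It has dimension $p^2$ with basis $\{g^ix^j : 0\le i,j\le p-1\}$. For a finite-dimensional Hopf algebra $H$ with multiplication $m$, comultiplication $\Delta$, counit $\varepsilon$ and antipode $S$: let $\Delta^{(1)}=\mathrm{id}$, $\Delta^{(n)}=(\Delta^{(n-1)}\otimes\mathrm{id})\circ\Delta$ for $n\ge 2$, let $m^{(n)}(h_1\otimes\cdots\otimes h_n)=h_1\cdots h_n$, and define the Sweedler power maps $P_0(h)=\varepsilon(h)1_H$ and $P_n=m^{(n)}\circ\Delta^{(n)}$ for $n\ge1$. The $n$-th (higher Frobenius–Schur) indicator of $H$ is $\nu_n(H)=\mathrm{Tr}(S\circ P_{n-1})\in\mathbf{k}$, the trace of the linear map $S\circ P_{n-1}:H\to H$. *)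

theory Defs
  imports Main "HOL-Computational_Algebra.Polynomial"
begin

text \<open>
  An element of R(p) is represented by its coordinate function with respect to
  the basis g^i x^j (0 <= i,j <= p-1): the coordinate of g^i x^j is v (i,j).
  Elements of the tensor power R(p)^(tensor n) are coordinate functions on
  length-n lists of basis indices; R(p) tensor R(p) uses pairs of basis indices.
\<close>

type_synonym 'k rvec = "nat \<times> nat \<Rightarrow> 'k"
type_synonym 'k rtens = "(nat \<times> nat) \<times> (nat \<times> nat) \<Rightarrow> 'k"

definition rbasis :: "nat \<Rightarrow> (nat \<times> nat) set" where
  "rbasis p = {0..<p} \<times> {0..<p}"

text \<open>Reduction of exponents of x using x^p = x (x^j = x^((j-1) mod (p-1) + 1) for j >= 1).\<close>
definition xexp :: "nat \<Rightarrow> nat \<Rightarrow> nat" where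
  "xexp p j = (if j < p then j else ((j - 1) mod (p - 1)) + 1)"

text \<open>The element g^i x^j (exponents reduced using g^p = 1 and x^p = x).\<close>
definition rmon :: "nat \<Rightarrow> nat \<Rightarrow> nat \<Rightarrow> 'k::field rvec" where
  "rmon p i j = (\<lambda>b. if b = (i mod p, xexp p j) then 1 else 0)"

definition rone :: "nat \<Rightarrow> 'k::field rvec" where
  "rone p = rmon p 0 0"

definition lmulG :: "nat \<Rightarrow> 'k::field rvec \<Rightarrow> 'k rvec" where
  "lmulG p v = (\<lambda>b. \<Sum>(i,j)\<in>rbasis p. v (i,j) * rmon p (i+1) j b)"

text \<open>Left multiplication by x, using the relation  x g^i = g^i x + i (g^i - g^(i+1)),
  which follows from  g x - x g = g^2 - g  by induction on i:
  x (g^i x^j) = g^i x^(j+1) + i g^i x^j - i g^(i+1) x^j.\<close>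
definition lmulX :: "nat \<Rightarrow> 'k::field rvec \<Rightarrow> 'k rvec" where
  "lmulX p v = (\<lambda>b. \<Sum>(i,j)\<in>rbasis p. v (i,j) *
      (rmon p i (j+1) b + of_nat i * rmon p i j b - of_nat i * rmon p (i+1) j b))"

definition rmult :: "nat \<Rightarrow> 'k::field rvec \<Rightarrow> 'k rvec \<Rightarrow> 'k rvec" where
  "rmult p u v = (\<lambda>b. \<Sum>(i,j)\<in>rbasis p. u (i,j) * ((lmulG p ^^ i) ((lmulX p ^^ j) v)) b)"

definition rpow :: "nat \<Rightarrow> 'k::field rvec \<Rightarrow> nat \<Rightarrow> 'k rvec" where
  "rpow p v k = ((rmult p v) ^^ k) (rone p)"

definition rG :: "nat \<Rightarrow> 'k::field rvec" where "rG p = rmon p 1 0"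
definition rX :: "nat \<Rightarrow> 'k::field rvec" where "rX p = rmon p 0 1"

definition rtensor :: "'k::field rvec \<Rightarrow> 'k rvec \<Rightarrow> 'k rtens" where
  "rtensor u v = (\<lambda>(e,f). u e * v f)"

definition tmult :: "nat \<Rightarrow> 'k::field rtens \<Rightarrow> 'k rtens \<Rightarrow> 'k rtens" where
  "tmult p U V = (\<lambda>(e,f). \<Sum>a\<in>rbasis p. \<Sum>b\<in>rbasis p. \<Sum>c\<in>rbasis p. \<Sum>d\<in>rbasis p.
      U (a,b) * V (c,d) * rmult p (rmon p (fst a) (snd a)) (rmon p (fst c) (snd c)) e
        * rmult p (rmon p (fst b) (snd b)) (rmon p (fst d) (snd d)) f)"

definition tpow :: "nat \<Rightarrow> 'k::field rtens \<Rightarrow> nat \<Rightarrow> 'k rtens" where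
  "tpow p T k = ((tmult p T) ^^ k) (rtensor (rone p) (rone p))"

text \<open>Comultiplication: Delta(g) = g tensor g, Delta(x) = x tensor 1 + g tensor x,
  extended as an algebra map:  Delta(g^i x^j) = Delta(g)^i Delta(x)^j, and linearly.\<close>
definition DeltaG :: "nat \<Rightarrow> 'k::field rtens" where
  "DeltaG p = rtensor (rG p) (rG p)"

definition DeltaX :: "nat \<Rightarrow> 'k::field rtens" where
  "DeltaX p = (\<lambda>ef. rtensor (rX p) (rone p) ef + rtensor (rG p) (rX p) ef)"

definition rDelta :: "nat \<Rightarrow> 'k::field rvec \<Rightarrow> 'k rtens" where
  "rDelta p v = (\<lambda>ef. \<Sum>(i,j)\<in>rbasis p. v (i,j) *
      tmult p (tpow p (DeltaG p) i) (tpow p (DeltaX p) j) ef)"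

definition reps :: "nat \<Rightarrow> 'k::field rvec \<Rightarrow> 'k" where
  "reps p v = (\<Sum>(i,j)\<in>rbasis p. v (i,j) * (if j = 0 then 1 else 0))"

text \<open>Antipode: the algebra anti-homomorphism with S(g) = g^(-1) = g^(p-1) and
  S(x) = - g^(-1) x, i.e.  S(g^i x^j) = S(x)^j S(g)^i, extended linearly.\<close>
definition rS :: "nat \<Rightarrow> 'k::field rvec \<Rightarrow> 'k rvec" where
  "rS p v = (\<lambda>b. \<Sum>(i,j)\<in>rbasis p. v (i,j) *
      rmult p (rpow p (\<lambda>c. - rmon p (p - 1) 1 c) j) (rpow p (rmon p (p - 1) 0) i) b)"

text \<open>Iterated comultiplication Delta^(n) : H -> H^(tensor n), n >= 1, with
  Delta^(1) = id and Delta^(n) = (Delta^(n-1) tensor id) o Delta.\<close>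
fun rDeltan :: "nat \<Rightarrow> nat \<Rightarrow> 'k::field rvec \<Rightarrow> (nat \<times> nat) list \<Rightarrow> 'k" where
  "rDeltan p 0 v bs = 0"
| "rDeltan p (Suc 0) v bs = (case bs of [b] \<Rightarrow> v b | _ \<Rightarrow> 0)"
| "rDeltan p (Suc (Suc n)) v bs = (if bs = [] then 0 else
      (\<Sum>c\<in>rbasis p. rDelta p v (c, last bs) *
          rDeltan p (Suc n) (rmon p (fst c) (snd c)) (butlast bs)))"

fun rprod :: "nat \<Rightarrow> (nat \<times> nat) list \<Rightarrow> 'k::field rvec" where
  "rprod p [] = rone p"
| "rprod p (b # bs) = rmult p (rmon p (fst b) (snd b)) (rprod p bs)"

text \<open>Sweedler power maps: P_0(h) = epsilon(h) 1, P_n = m^(n) o Delta^(n).\<close>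
definition rP :: "nat \<Rightarrow> nat \<Rightarrow> 'k::field rvec \<Rightarrow> 'k rvec" where
  "rP p n v = (if n = 0 then (\<lambda>b. reps p v * rone p b)
     else (\<lambda>b. \<Sum>bs\<in>{bs. set bs \<subseteq> rbasis p \<and> length bs = n}.
                 rDeltan p n v bs * rprod p bs b))"

definition rtrace :: "nat \<Rightarrow> ('k::field rvec \<Rightarrow> 'k rvec) \<Rightarrow> 'k" where
  "rtrace p f = (\<Sum>(i,j)\<in>rbasis p. f (rmon p i j) (i,j))"

definition radford_indicator :: "nat \<Rightarrow> nat \<Rightarrow> 'k::field" where
  "radford_indicator p n = rtrace p (\<lambda>v. rS p (rP p (n - 1) v))"

end

theory Submission
  imports Defs "HOL-Computational_Algebra.Primes"
begin


definition MM :: "nat \<Rightarrow> 'k::field poly" where "MM p = monom 1 p - 1"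

lemma degree_MM: "p \<ge> 1 \<Longrightarrow> degree (MM p :: 'k::field poly) = p"
proof -
  assume p: "p \<ge> 1"
  have "monom 1 p - 1 = monom (1::'k) p + (- 1)" by simp
  also have "degree \<dots> = p" using p by (subst degree_add_eq_left) (auto simp: degree_monom_eq)
  finally show ?thesis by (simp add: MM_def)
qed

lemma MM_nz: "p \<ge> 1 \<Longrightarrow> (MM p :: 'k::field poly) \<noteq> 0"
  using degree_MM[of p] by (metis degree_0 not_one_le_zero)

lemma mod_sum_poly: "(\<Sum>x\<in>A. f x) mod (m::'k::field poly) = (\<Sum>x\<in>A. f x mod m)"
  by (induction A rule: infinite_finite_induct) (auto simp: poly_mod_add_left)

lemma monom_p_mod: "p \<ge> 2 \<Longrightarrow> monom 1 p mod MM p = (1::'k::field poly)"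
proof -
  assume p: "p \<ge> 2"
  have "monom 1 p = MM p + (1::'k poly)" by (simp add: MM_def)
  hence "monom 1 p mod MM p = (1::'k poly) mod MM p" by (simp add: poly_mod_add_left)
  also have "\<dots> = 1" using p by (intro mod_poly_less) (simp add: degree_MM)
  finally show ?thesis .
qed

lemma monom_mod: "p \<ge> 2 \<Longrightarrow> monom 1 k mod MM p = (monom 1 (k mod p) :: 'k::field poly)"
proof -
  assume p: "p \<ge> 2"
  have e: "monom (1::'k) k = (monom 1 p) ^ (k div p) * monom 1 (k mod p)"
    by (simp add: monom_power mult_monom mult.commute)
  have one: "(1::'k poly) mod MM p = 1" using p by (intro mod_poly_less) (simp add: degree_MM)
  have "((monom (1::'k) p) ^ (k div p)) mod MM p = ((monom 1 p mod MM p) ^ (k div p)) mod MM p"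
    by (rule power_mod[symmetric])
  also have "\<dots> = 1" using p by (simp add: monom_p_mod one)
  finally have h: "((monom (1::'k) p) ^ (k div p)) mod MM p = 1" .
  have "monom (1::'k) k mod MM p = (((monom (1::'k) p) ^ (k div p)) mod MM p * monom 1 (k mod p)) mod MM p"
    unfolding e by (rule mod_mult_left_eq[symmetric])
  hence "monom (1::'k) k mod MM p = (1 * monom 1 (k mod p)) mod MM p" unfolding h .
  also have "\<dots> = monom 1 (k mod p)" using p
    by (simp add: mod_poly_less degree_MM degree_monom_eq)
  finally show ?thesis .
qed

lemma coeff_monom_mod: "p \<ge> 2 \<Longrightarrow> s < p \<Longrightarrow>
   coeff (monom c k mod MM p) s = (if k mod p = s then c else (0::'k::field))"
proof -
  assume p: "p \<ge> 2" and s: "s < p"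
  have "monom c k mod MM p = smult c (monom 1 k mod MM p)"
    by (metis mod_smult_left smult_monom mult.right_neutral)
  thus ?thesis using p s by (simp add: monom_mod coeff_monom)
qed

lemma degree_mod_MM: "p \<ge> 2 \<Longrightarrow> degree (P mod MM p :: 'k::field poly) < p"
proof -
  assume p: "p \<ge> 2"
  show ?thesis
  proof (cases "P mod MM p = 0")
    case True thus ?thesis using p by simp
  next
    case False
    have "degree (MM p :: 'k poly) = p" using p by (simp add: degree_MM)
    thus ?thesis using p degree_mod_less'[OF MM_nz[of p] False] by simp
  qed
qed

lemma mod_expand: "p \<ge> 2 \<Longrightarrow>
  P mod MM p = (\<Sum>a<p. monom (coeff (P mod MM p) a) a :: 'k::field poly)"
proof -
  assume p: "p \<ge> 2"
  have "degree (P mod MM p) \<le> p - 1" using degree_mod_MM[OF p, of P] by simp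
  from poly_as_sum_of_monoms'[OF this] have "(\<Sum>i\<le>p-1. monom (coeff (P mod MM p) i) i) = P mod MM p" .
  moreover have "{..p-1} = {..<p}" using p by auto
  ultimately show ?thesis by simp
qed

lemma coeff_sum_monom_mod: "p \<ge> 2 \<Longrightarrow> s < p \<Longrightarrow>
  coeff ((\<Sum>b\<in>A. monom (c b) (f b)) mod MM p) s = (\<Sum>b\<in>A. if f b mod p = s then c b else (0::'k::field))"
  by (simp add: mod_sum_poly coeff_sum coeff_monom_mod)

lemma coeff_shift_mod:
  assumes p: "p \<ge> 2" and s: "s < p"
  shows "coeff ((monom 1 k * P) mod MM p) s = coeff (P mod MM p) ((s + p - k mod p) mod p)"
proof -
  let ?c = "\<lambda>a. coeff (P mod MM p) a"
  have "(monom 1 k * P) mod MM p = (monom 1 k * (P mod MM p)) mod MM p"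
    by (simp add: mod_mult_right_eq)
  also have "monom 1 k * (P mod MM p) = (\<Sum>a<p. monom (?c a) (k + a))"
    by (subst mod_expand[OF p]) (simp add: sum_distrib_left mult_monom)
  finally have "coeff ((monom 1 k * P) mod MM p) s = (\<Sum>a<p. if (k + a) mod p = s then ?c a else 0)"
    using p s by (simp add: coeff_sum_monom_mod)
  also have "\<dots> = (\<Sum>a<p. if a = (s + p - k mod p) mod p then ?c a else 0)"
  proof (rule sum.cong[OF refl])
    fix a assume a: "a \<in> {..<p}"
    have "(k + a) mod p = s \<longleftrightarrow> a = (s + p - k mod p) mod p"
    proof
      assume h: "(k + a) mod p = s"
      have km: "k mod p < p" using p by simp
      have "(s + p - k mod p) mod p = ((k + a) mod p + p - k mod p) mod p" using h by simp
      also have "\<dots> = ((k mod p + a) mod p + (p - k mod p)) mod p" using km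
        by (simp add: mod_add_left_eq)
      also have "\<dots> = ((k mod p + a) + (p - k mod p)) mod p" by (rule mod_add_left_eq)
      also have "(k mod p + a) + (p - k mod p) = a + p" using km by simp
      finally show "a = (s + p - k mod p) mod p" using a by simp
    next
      assume h: "a = (s + p - k mod p) mod p"
      have "k mod p < p" using p by simp
      hence "k mod p + (s + p - k mod p) = s + p" by simp
      hence "(k mod p + (s + p - k mod p)) mod p = s" using s by simp
      have "(k + a) mod p = (k mod p + a) mod p" by (simp add: mod_add_left_eq)
      also have "\<dots> = (k mod p + (s + p - k mod p)) mod p" unfolding h by (simp add: mod_add_right_eq)
      finally show "(k + a) mod p = s" using \<open>(k mod p + (s + p - k mod p)) mod p = s\<close> by simp
    qed
    thus "(if (k + a) mod p = s then ?c a else 0) = (if a = (s + p - k mod p) mod p then ?c a else 0)"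
      by simp
  qed
  also have "\<dots> = ?c ((s + p - k mod p) mod p)" using p by simp
  finally show ?thesis .
qed



lemma sum_rbasis: "(\<Sum>(i,j)\<in>rbasis p. f i j) = (\<Sum>i<p. \<Sum>j<p. f i j)"
  unfolding rbasis_def by (simp add: sum.cartesian_product lessThan_atLeast0)

lemma sum_delta2: "(i0::nat) < p \<Longrightarrow> (j0::nat) < q \<Longrightarrow>
  (\<Sum>i<p. \<Sum>j<q. if i = i0 \<and> j = j0 then f i j else 0) = (f i0 j0 :: 'a::comm_monoid_add)"
proof -
  assume a: "i0 < p" "j0 < q"
  have "(\<Sum>i<p. \<Sum>j<q. if i = i0 \<and> j = j0 then f i j else 0) = (\<Sum>i<p. if i = i0 then f i j0 else 0)"
    by (intro sum.cong refl) (use a in auto)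
  also have "\<dots> = f i0 j0" using a by simp
  finally show ?thesis .
qed

lemma xexp_less: "j < p \<Longrightarrow> xexp p j = j" by (simp add: xexp_def)

lemma xexp_lt: "p \<ge> 2 \<Longrightarrow> xexp p j < p"
proof -
  assume p: "p \<ge> 2"
  have "(j - 1) mod (p - 1) < p - 1" using p by (intro mod_less_divisor) auto
  hence "(j - 1) mod (p - 1) + 1 < p" by linarith
  thus ?thesis unfolding xexp_def using p by auto
qed

lemma xexp_Suc: "p \<ge> 2 \<Longrightarrow> j < p \<Longrightarrow> xexp p (Suc j) = (if Suc j < p then Suc j else 1)"
proof -
  assume p: "p \<ge> 2" and j: "j < p"
  show ?thesis
  proof (cases "Suc j < p")
    case False
    hence "j = p - 1" using j by auto
    thus ?thesis using False p unfolding xexp_def by auto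
  qed (auto simp: xexp_def)
qed

lemma rmon_val: "p \<ge> 2 \<Longrightarrow> a < p \<Longrightarrow> b < p \<Longrightarrow> i < p \<Longrightarrow> j < p \<Longrightarrow>
  rmon p i j (a,b) = (if a = i \<and> b = j then 1 else 0)"
  unfolding rmon_def by (auto simp: xexp_less)

lemma pred_mod: "p \<ge> 2 \<Longrightarrow> (a::nat) < p \<Longrightarrow> i < p \<Longrightarrow> ((i + 1) mod p = a) = (i = (a + p - 1) mod p)"
proof -
  assume p: "p \<ge> 2" and a: "a < p" and i: "i < p"
  show ?thesis
  proof (cases "a = 0")
    case True
    have "(a + p - 1) mod p = p - 1" using True p by simp
    moreover have "(i + 1) mod p = 0 \<longleftrightarrow> i + 1 = p" using i by (cases "i + 1 = p") auto
    ultimately show ?thesis using True p by auto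
  next
    case False
    hence "(a + p - 1) mod p = a - 1" using a by (simp add: mod_if)
    moreover have "(i + 1) mod p = a \<longleftrightarrow> i + 1 = a"
      using i a False by (cases "i + 1 = p") auto
    ultimately show ?thesis using False by auto
  qed
qed

lemma lmulG_val: "p \<ge> 2 \<Longrightarrow> a < p \<Longrightarrow> b < p \<Longrightarrow> lmulG p v (a,b) = v ((a + p - 1) mod p, b)"
proof -
  assume p: "p \<ge> 2" and a: "a < p" and b: "b < p"
  have "lmulG p v (a,b) = (\<Sum>i<p. \<Sum>j<p. v (i,j) * rmon p (i+1) j (a,b))"
    unfolding lmulG_def by (simp add: sum_rbasis)
  also have "\<dots> = (\<Sum>i<p. \<Sum>j<p. if i = (a + p - 1) mod p \<and> j = b then v (i,j) else 0)"
  proof (intro sum.cong refl)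
    fix i j assume i: "i \<in> {..<p}" and j: "j \<in> {..<p}"
    have "rmon p (i+1) j (a,b) = (if (i + 1) mod p = a \<and> j = b then 1 else 0)"
      using j by (auto simp: rmon_def xexp_less)
    also have "\<dots> = (if i = (a + p - 1) mod p \<and> j = b then 1 else 0)"
      using pred_mod[OF p a, of i] i by simp
    finally have r: "rmon p (i+1) j (a,b) = (if i = (a + p - 1) mod p \<and> j = b then 1 else 0)" .
    show "v (i,j) * rmon p (i+1) j (a,b) = (if i = (a + p - 1) mod p \<and> j = b then v (i,j) else 0)"
      unfolding r by simp
  qed
  also have "\<dots> = v ((a + p - 1) mod p, b)" using p b
    by (intro sum_delta2) auto
  finally show ?thesis .
qed

lemma xexp_Suc_eq: "p \<ge> 2 \<Longrightarrow> j < p \<Longrightarrow> b < p \<Longrightarrow>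
  (xexp p (Suc j) = b) = ((0 < b \<and> j = b - 1) \<or> (b = 1 \<and> j = p - 1))"
  by (auto simp: xexp_Suc)

lemma lmulX_val:
  assumes p: "p \<ge> 2" and a: "a < p" and b: "b < p"
  shows "lmulX p v (a,b) = (if 0 < b then v (a, b-1) else 0) + (if b = 1 then v (a, p-1) else 0)
     + of_nat a * v (a,b) - of_nat ((a + p - 1) mod p) * v ((a + p - 1) mod p, b)"
proof -
  let ?a' = "(a + p - 1) mod p"
  have "lmulX p v (a,b) = (\<Sum>i<p. \<Sum>j<p. v (i,j) * rmon p i (j+1) (a,b))
     + (\<Sum>i<p. \<Sum>j<p. v (i,j) * (of_nat i * rmon p i j (a,b)))
     - (\<Sum>i<p. \<Sum>j<p. v (i,j) * (of_nat i * rmon p (i+1) j (a,b)))"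
    unfolding lmulX_def sum_rbasis
    by (simp add: algebra_simps sum.distrib sum_subtractf)
  also have "(\<Sum>i<p. \<Sum>j<p. v (i,j) * rmon p i (j+1) (a,b))
     = (\<Sum>i<p. \<Sum>j<p. (if i = a \<and> j = b - 1 then (if 0 < b then v (i,j) else 0) else 0)
          + (if i = a \<and> j = p - 1 then (if b = 1 then v (i,j) else 0) else 0))"
  proof (intro sum.cong refl)
    fix i j assume i: "i \<in> {..<p}" and j: "j \<in> {..<p}"
    have c: "(xexp p (Suc j) = b) = ((0 < b \<and> j = b - 1) \<or> (b = 1 \<and> j = p - 1))"
      using xexp_Suc_eq[OF p _ b, of j] j by simp
    have "rmon p i (j+1) (a,b) = (if a = i \<and> xexp p (Suc j) = b then 1 else 0)"
      using i by (auto simp: rmon_def)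
    also have "\<dots> = (if a = i \<and> ((0 < b \<and> j = b - 1) \<or> (b = 1 \<and> j = p - 1)) then 1 else 0)"
      unfolding c ..
    finally have r: "rmon p i (j+1) (a,b) = (if a = i \<and> ((0 < b \<and> j = b - 1) \<or> (b = 1 \<and> j = p - 1)) then 1 else 0)" .
    show "v (i,j) * rmon p i (j+1) (a,b) = (if i = a \<and> j = b - 1 then (if 0 < b then v (i,j) else 0) else 0)
          + (if i = a \<and> j = p - 1 then (if b = 1 then v (i,j) else 0) else 0)"
      unfolding r using b p by auto
  qed
  also have "\<dots> = (if 0 < b then v (a, b-1) else 0) + (if b = 1 then v (a, p-1) else 0)"
    using a b p by (simp add: sum.distrib sum_delta2)
  also have "(\<Sum>i<p. \<Sum>j<p. v (i,j) * (of_nat i * rmon p i j (a,b)))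
     = (\<Sum>i<p. \<Sum>j<p. if i = a \<and> j = b then of_nat i * v (i,j) else 0)"
    by (intro sum.cong refl) (auto simp: rmon_def xexp_less)
  also have "\<dots> = of_nat a * v (a,b)" using a b by (simp add: sum_delta2)
  also have "(\<Sum>i<p. \<Sum>j<p. v (i,j) * (of_nat i * rmon p (i+1) j (a,b)))
     = (\<Sum>i<p. \<Sum>j<p. if i = ?a' \<and> j = b then of_nat i * v (i,j) else 0)"
  proof (intro sum.cong refl)
    fix i j assume i: "i \<in> {..<p}" and j: "j \<in> {..<p}"
    have "rmon p (i+1) j (a,b) = (if (i + 1) mod p = a \<and> j = b then 1 else 0)"
      using j by (auto simp: rmon_def xexp_less)
    also have "\<dots> = (if i = ?a' \<and> j = b then 1 else 0)"
      using pred_mod[OF p a, of i] i by simp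
    finally have r: "rmon p (i+1) j (a,b) = (if i = ?a' \<and> j = b then 1 else 0)" .
    show "v (i,j) * (of_nat i * rmon p (i+1) j (a,b)) = (if i = ?a' \<and> j = b then of_nat i * v (i,j) else 0)"
      unfolding r by simp
  qed
  also have "\<dots> = of_nat ?a' * v (?a', b)" using p b by (intro sum_delta2) auto
  finally show ?thesis .
qed



definition DL :: "nat \<Rightarrow> nat \<Rightarrow> 'k::field rvec \<Rightarrow> bool" where
  "DL p d v = (\<forall>a<p. \<forall>j<p. d < j \<longrightarrow> v (a,j) = 0)"

definition LD :: "nat \<Rightarrow> nat \<Rightarrow> 'k::field poly \<Rightarrow> 'k rvec \<Rightarrow> bool" where
  "LD p d P v = (DL p d v \<and> (\<forall>a<p. v (a,d) = coeff (P mod MM p) a))"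

lemma LD_DL: "LD p d P v \<Longrightarrow> DL p d v" by (simp add: LD_def)

lemma DL_G: "p \<ge> 2 \<Longrightarrow> DL p d v \<Longrightarrow> DL p d (lmulG p v)"
  unfolding DL_def by (auto simp: lmulG_val)

lemma LD_G: "p \<ge> 2 \<Longrightarrow> LD p d P v \<Longrightarrow> d < p \<Longrightarrow> LD p d (monom 1 1 * P) (lmulG p v)"
  unfolding LD_def using DL_G by (auto simp: lmulG_val coeff_shift_mod)

lemma DL_X: "p \<ge> 2 \<Longrightarrow> DL p d v \<Longrightarrow> d + 1 < p \<Longrightarrow> DL p (d+1) (lmulX p v)"
  unfolding DL_def by (auto simp: lmulX_val)

lemma LD_X: "p \<ge> 2 \<Longrightarrow> LD p d P v \<Longrightarrow> d + 1 < p \<Longrightarrow> LD p (d+1) P (lmulX p v)"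
  unfolding LD_def using DL_X by (auto simp: lmulX_val DL_def)

lemma DL_Gpow: "p \<ge> 2 \<Longrightarrow> DL p d v \<Longrightarrow> DL p d ((lmulG p ^^ i) v)"
  by (induction i) (auto intro: DL_G)

lemma LD_Gpow:
  assumes p: "p \<ge> 2" and v: "LD p d P v" and d: "d < p"
  shows "LD p d (monom 1 i * P) ((lmulG p ^^ i) v)"
proof (induction i)
  case 0 thus ?case using v by (simp add: one_pCons[symmetric] monom_0)
next
  case (Suc i)
  have "LD p d (monom 1 1 * (monom 1 i * P)) (lmulG p ((lmulG p ^^ i) v))"
    by (rule LD_G[OF p Suc d])
  thus ?case by (simp add: mult.assoc[symmetric] mult_monom)
qed

lemma DL_Xpow:
  assumes p: "p \<ge> 2" and v: "DL p d v"
  shows "d + k < p \<Longrightarrow> DL p (d+k) ((lmulX p ^^ k) v)"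
proof (induction k)
  case 0 thus ?case using v by simp
next
  case (Suc k)
  have "DL p (d + k + 1) (lmulX p ((lmulX p ^^ k) v))"
    using Suc by (intro DL_X[OF p]) auto
  thus ?case by simp
qed

lemma LD_Xpow:
  assumes p: "p \<ge> 2" and v: "LD p d P v"
  shows "d + k < p \<Longrightarrow> LD p (d+k) P ((lmulX p ^^ k) v)"
proof (induction k)
  case 0 thus ?case using v by simp
next
  case (Suc k)
  have "LD p (d + k + 1) P (lmulX p ((lmulX p ^^ k) v))"
    using Suc by (intro LD_X[OF p]) auto
  thus ?case by simp
qed

lemma LD_low: "DL p e v \<Longrightarrow> e < d \<Longrightarrow> d < p \<Longrightarrow> LD p d 0 v"
  unfolding LD_def DL_def by auto

lemma DL_mono: "DL p e v \<Longrightarrow> e \<le> d \<Longrightarrow> DL p d v"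
  unfolding DL_def by auto

lemma monom_mult_smult: "monom (c::'a::comm_ring_1) i * Q = smult c (monom 1 i * Q)"
proof -
  have "monom c i = smult c (monom 1 i)" by (simp add: smult_monom)
  thus ?thesis by simp
qed

lemma LD_rmult:
  assumes p: "p \<ge> 2" and u: "LD p d1 P u" and v: "LD p d2 Q v" and d: "d1 + d2 < p"
  shows "LD p (d1+d2) (P*Q) (rmult p u v)"
proof -
  have term0: "u (i,j) * ((lmulG p ^^ i) ((lmulX p ^^ j) v)) (a,e) = 0"
    if "i < p" "j < p" "a < p" "e < p" "d2 + j < e \<or> d1 < j" for i j a e
  proof (cases "d1 < j")
    case True thus ?thesis using u that unfolding LD_def DL_def by auto
  next
    case False
    hence "DL p (d2 + j) ((lmulG p ^^ i) ((lmulX p ^^ j) v))"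
      using d v p by (intro DL_Gpow DL_Xpow LD_DL) auto
    thus ?thesis using that False unfolding DL_def by auto
  qed
  have DLr: "DL p (d1+d2) (rmult p u v)"
    unfolding DL_def
  proof (intro allI impI)
    fix a e assume a: "a < p" and e: "e < p" and de: "d1 + d2 < e"
    have "rmult p u v (a,e) = (\<Sum>i<p. \<Sum>j<p. u (i,j) * ((lmulG p ^^ i) ((lmulX p ^^ j) v)) (a,e))"
      unfolding rmult_def by (simp add: sum_rbasis)
    also have "\<dots> = 0"
    proof (intro sum.neutral ballI)
      fix i j assume i: "i \<in> {..<p}" and j: "j \<in> {..<p}"
      have "d2 + j < e \<or> d1 < j" using de by auto
      thus "u (i,j) * ((lmulG p ^^ i) ((lmulX p ^^ j) v)) (a,e) = 0"
        using term0[of i j a e] i j a e by auto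
    qed
    finally show "rmult p u v (a,e) = 0" .
  qed
  have lead: "rmult p u v (a, d1+d2) = coeff ((P*Q) mod MM p) a" if a: "a < p" for a
  proof -
    let ?c = "\<lambda>i. coeff (P mod MM p) i"
    have "rmult p u v (a,d1+d2) = (\<Sum>i<p. \<Sum>j<p. u (i,j) * ((lmulG p ^^ i) ((lmulX p ^^ j) v)) (a,d1+d2))"
      unfolding rmult_def by (simp add: sum_rbasis)
    also have "\<dots> = (\<Sum>i<p. \<Sum>j<p. if j = d1 then ?c i * coeff ((monom 1 i * Q) mod MM p) a else 0)"
    proof (intro sum.cong refl)
      fix i j assume i: "i \<in> {..<p}" and j: "j \<in> {..<p}"
      show "u (i,j) * ((lmulG p ^^ i) ((lmulX p ^^ j) v)) (a,d1+d2)
          = (if j = d1 then ?c i * coeff ((monom 1 i * Q) mod MM p) a else 0)"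
      proof (cases "j = d1")
        case True
        have "LD p (d2 + d1) (monom 1 i * Q) ((lmulG p ^^ i) ((lmulX p ^^ d1) v))"
          using p v d by (intro LD_Gpow LD_Xpow) auto
        thus ?thesis using True u i a unfolding LD_def by (simp add: add.commute)
      next
        case False
        hence "d2 + j < d1 + d2 \<or> d1 < j" by auto
        thus ?thesis using term0[of i j a "d1+d2"] i j a d False by auto
      qed
    qed
    also have "\<dots> = (\<Sum>i<p. ?c i * coeff ((monom 1 i * Q) mod MM p) a)"
      using d by simp
    also have "\<dots> = coeff ((\<Sum>i<p. monom (?c i) i * Q) mod MM p) a"
      by (simp add: mod_sum_poly coeff_sum monom_mult_smult[of "coeff (P mod MM p) _"] mod_smult_left)
    also have "(\<Sum>i<p. monom (?c i) i * Q) = (P mod MM p) * Q"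
      by (subst (2) mod_expand[OF p]) (simp add: sum_distrib_right)
    also have "((P mod MM p) * Q) mod MM p = (P * Q) mod MM p"
      by (simp add: mod_mult_left_eq)
    finally show ?thesis .
  qed
  show ?thesis unfolding LD_def using DLr lead by auto
qed



lemma LD_rmon: "p \<ge> 2 \<Longrightarrow> a < p \<Longrightarrow> d < p \<Longrightarrow> LD p d (monom 1 a) (rmon p a d)"
  unfolding LD_def DL_def by (auto simp: rmon_val coeff_monom_mod)

lemma LD_rone: "p \<ge> 2 \<Longrightarrow> LD p 0 1 (rone p)"
  using LD_rmon[of p 0 0] by (simp add: rone_def one_pCons[symmetric] monom_0)

lemma LD_neg: "LD p d P v \<Longrightarrow> LD p d (-P) (\<lambda>c. - v c)"
  unfolding LD_def DL_def by auto

definition xdeg :: "(nat \<times> nat) list \<Rightarrow> nat" where "xdeg bs = sum_list (map snd bs)"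
definition gsum :: "(nat \<times> nat) list \<Rightarrow> nat" where "gsum bs = sum_list (map fst bs)"

lemma LD_rprod: "p \<ge> 2 \<Longrightarrow> set bs \<subseteq> rbasis p \<Longrightarrow> xdeg bs < p \<Longrightarrow>
   LD p (xdeg bs) (monom 1 (gsum bs)) (rprod p bs :: 'k::field rvec)"
proof (induction bs)
  case Nil thus ?case using LD_rone[of p] by (simp add: xdeg_def gsum_def one_pCons[symmetric] monom_0)
next
  case (Cons b bs)
  obtain b1 b2 where b: "b = (b1,b2)" by fastforce
  have bB: "b1 < p" "b2 < p" using Cons.prems b by (auto simp: rbasis_def)
  have lt: "b2 + xdeg bs < p" using Cons.prems b by (simp add: xdeg_def)
  have IH: "LD p (xdeg bs) (monom 1 (gsum bs)) (rprod p bs :: 'k rvec)"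
    using Cons lt by auto
  have "LD p (b2 + xdeg bs) (monom 1 b1 * monom 1 (gsum bs)) (rmult p (rmon p b1 b2) (rprod p bs) :: 'k rvec)"
    by (rule LD_rmult[OF Cons.prems(1) LD_rmon[OF Cons.prems(1) bB] IH lt])
  thus ?case by (simp add: b xdeg_def gsum_def mult_monom)
qed

lemma LD_rpow: "p \<ge> 2 \<Longrightarrow> LD p d P v \<Longrightarrow> d * k < p \<Longrightarrow> LD p (d * k) (P ^ k) (rpow p v k)"
proof (induction k)
  case 0 thus ?case using LD_rone[of p] by (simp add: rpow_def)
next
  case (Suc k)
  have "d * k \<le> d * Suc k" by simp
  hence "LD p (d + d * k) (P * P ^ k) (rmult p v (rpow p v k))"
    using Suc by (intro LD_rmult) auto
  thus ?case by (simp add: rpow_def)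
qed

lemma uniq_res:
  fixes r r' t p :: nat
  assumes "r < p" "r' < p" "p dvd r + t" "p dvd r' + t"
  shows "r = r'"
proof -
  have "int p dvd (int r + int t) - (int r' + int t)"
    using assms(3,4) by (metis dvd_diff of_nat_add int_dvd_int_iff)
  hence d: "int p dvd int r - int r'" by simp
  show ?thesis
  proof (rule ccontr)
    assume "r \<noteq> r'"
    hence "int r - int r' \<noteq> 0" by simp
    from dvd_imp_le_int[OF this d] have "int p \<le> \<bar>int r - int r'\<bar>" by simp
    thus False using assms(1,2) by simp
  qed
qed

lemma neg_res: "p \<ge> 2 \<Longrightarrow> (i::nat) < p \<Longrightarrow> (((p - 1) * t) mod p = i) = ((i + t) mod p = 0)"
proof -
  assume p: "p \<ge> 2" and i: "i < p"
  have key: "p dvd ((p - 1) * t) mod p + t"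
  proof -
    have "(((p - 1) * t) mod p + t) mod p = ((p - 1) * t + t) mod p" by (simp add: mod_add_left_eq)
    also have "(p - 1) * t + t = p * t" using p by (simp add: algebra_simps)
    finally have "(((p - 1) * t) mod p + t) mod p = 0" by simp
    thus ?thesis by (rule mod_0_imp_dvd)
  qed
  show ?thesis
  proof
    assume "(p - 1) * t mod p = i" thus "(i + t) mod p = 0" using key by auto
  next
    assume "(i + t) mod p = 0"
    hence "p dvd i + t" by auto
    thus "(p - 1) * t mod p = i" using uniq_res[OF _ i key] p by auto
  qed
qed

lemma rS_val:
  assumes p: "p \<ge> 2" and w: "LD p d Q w" and d: "d < p" and i: "i < p"
  shows "rS p w (i,d) = (-1)^d * coeff ((monom 1 (i + d) * Q) mod MM p) 0"
proof -
  let ?sx = "\<lambda>c. - rmon p (p - 1) 1 c" and ?sg = "rmon p (p - 1) 0 :: 'a rvec"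
  let ?T = "\<lambda>a b. rmult p (rpow p ?sx b) (rpow p ?sg a)"
  let ?c = "\<lambda>a. coeff (Q mod MM p) a"
  have LDT: "LD p b ((- monom 1 (p - 1)) ^ b * (monom 1 (p - 1)) ^ a) (?T a b)" if "b < p" for a b
  proof -
    have sx: "LD p 1 (- monom 1 (p - 1)) ?sx" using p by (intro LD_neg LD_rmon) auto
    have sg: "LD p 0 (monom 1 (p - 1)) ?sg" using p by (intro LD_rmon) auto
    have "LD p (1 * b + 0 * a) ((- monom 1 (p - 1)) ^ b * (monom 1 (p - 1)) ^ a) (?T a b)"
      using that by (intro LD_rmult LD_rpow p sx sg) auto
    thus ?thesis by simp
  qed
  have "rS p w (i,d) = (\<Sum>a<p. \<Sum>b<p. w (a,b) * ?T a b (i,d))"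
    unfolding rS_def by (simp add: sum_rbasis)
  also have "\<dots> = (\<Sum>a<p. \<Sum>b<p. if b = d then (-1)^d * (?c a * (if ((p - 1) * (d + a)) mod p = i then 1 else 0)) else 0)"
  proof (intro sum.cong refl)
    fix a b assume a: "a \<in> {..<p}" and b: "b \<in> {..<p}"
    consider "b < d" | "b = d" | "d < b" by linarith
    thus "w (a,b) * ?T a b (i,d) = (if b = d then (-1)^d * (?c a * (if ((p - 1) * (d + a)) mod p = i then 1 else 0)) else 0)"
    proof cases
      case 1 thus ?thesis using LDT[of b a] a b i d unfolding LD_def DL_def by auto
    next
      case 3 thus ?thesis using w a b unfolding LD_def DL_def by auto
    next
      case 2
      have e: "(- monom 1 (p - 1)) ^ d * (monom 1 (p - 1)) ^ a = smult ((-1)^d) (monom (1::'a) ((p - 1) * (d + a)))"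
      proof -
        have n: "(- monom (1::'a) (p - 1)) ^ k = smult ((-1)^k) (monom 1 ((p - 1) * k))" for k
        proof (induction k)
          case 0 thus ?case by (simp add: one_pCons[symmetric] monom_0)
        next
          case (Suc k)
          have "(- monom (1::'a) (p - 1)) ^ Suc k = - (monom 1 (p - 1) * smult ((-1)^k) (monom 1 ((p - 1) * k)))"
            using Suc by simp
          also have "\<dots> = smult ((-1)^Suc k) (monom 1 ((p - 1) + (p - 1) * k))"
            by (simp add: mult_monom)
          finally show ?case by simp
        qed
        have m: "(monom (1::'a) (p - 1)) ^ a = monom 1 ((p - 1) * a)" by (simp add: monom_power mult.commute)
        show ?thesis unfolding n m by (simp add: mult_monom distrib_left)
      qed
      have "?T a b (i,d) = coeff (((- monom 1 (p - 1)) ^ d * (monom 1 (p - 1)) ^ a) mod MM p) i"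
        using LDT[of d a] 2 d i unfolding LD_def by blast
      also have "\<dots> = coeff ((smult ((-1)^d) (monom (1::'a) ((p - 1) * (d + a)))) mod MM p) i"
        by (simp only: e)
      also have "\<dots> = (-1)^d * (if ((p - 1) * (d + a)) mod p = i then 1 else 0)"
        using p i by (simp add: mod_smult_left coeff_monom_mod)
      finally show ?thesis using 2 w a unfolding LD_def by auto
    qed
  qed
  also have "\<dots> = (\<Sum>a<p. (-1)^d * (?c a * (if ((p - 1) * (d + a)) mod p = i then 1 else 0)))"
    using d by simp
  also have "\<dots> = (-1)^d * (\<Sum>a<p. ?c a * (if (i + d + a) mod p = 0 then 1 else 0))"
  proof -
    have nr: "(((p - 1) * (d + a)) mod p = i) = ((i + d + a) mod p = 0)" for a
      using neg_res[OF p i, of "d + a"] by (simp only: add.assoc)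
    show ?thesis unfolding nr by (simp add: sum_distrib_left)
  qed
  also have "(\<Sum>a<p. ?c a * (if (i + d + a) mod p = 0 then 1 else 0)) = coeff ((monom 1 (i + d) * Q) mod MM p) 0"
  proof -
    have "(monom 1 (i + d) * Q) mod MM p = (monom 1 (i + d) * (Q mod MM p)) mod MM p"
      by (simp add: mod_mult_right_eq)
    also have "monom 1 (i + d) * (Q mod MM p) = (\<Sum>a<p. monom (?c a) (i + d + a))"
      by (subst mod_expand[OF p]) (simp add: sum_distrib_left mult_monom)
    finally show ?thesis using p by (simp add: coeff_sum_monom_mod if_distrib cong: if_cong)
  qed
  finally show ?thesis .
qed



definition Wt :: "'k::field poly \<Rightarrow> 'k poly \<Rightarrow> nat \<times> nat \<Rightarrow> nat \<times> nat \<Rightarrow> 'k poly" where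
  "Wt u h e f = monom 1 (fst f) * u ^ fst e * h ^ snd e"

definition Psi :: "nat \<Rightarrow> 'k::field poly \<Rightarrow> 'k poly \<Rightarrow> nat \<Rightarrow> 'k rtens \<Rightarrow> 'k poly" where
  "Psi p u h d T = (\<Sum>e\<in>rbasis p. \<Sum>f\<in>rbasis p.
      if snd e + snd f = d then smult (T (e,f)) (Wt u h e f) else 0)"

definition TDL :: "nat \<Rightarrow> nat \<Rightarrow> 'k::field rtens \<Rightarrow> bool" where
  "TDL p d T = (\<forall>e\<in>rbasis p. \<forall>f\<in>rbasis p. d < snd e + snd f \<longrightarrow> T (e,f) = 0)"

definition LT :: "nat \<Rightarrow> 'k::field poly \<Rightarrow> 'k poly \<Rightarrow> nat \<Rightarrow> 'k poly \<Rightarrow> 'k rtens \<Rightarrow> bool" where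
  "LT p u h d Q T = (TDL p d T \<and> Psi p u h d T mod MM p = Q mod MM p)"

lemma Psi_sum: "Psi p u h d (\<lambda>x. \<Sum>i\<in>I. F i x) = (\<Sum>i\<in>I. Psi p u h d (F i))"
proof -
  have "Psi p u h d (\<lambda>x. \<Sum>i\<in>I. F i x) = (\<Sum>e\<in>rbasis p. \<Sum>f\<in>rbasis p. \<Sum>i\<in>I.
      if snd e + snd f = d then smult (F i (e,f)) (Wt u h e f) else 0)"
    unfolding Psi_def by (intro sum.cong refl) (simp add: smult_sum)
  also have "\<dots> = (\<Sum>e\<in>rbasis p. \<Sum>i\<in>I. \<Sum>f\<in>rbasis p.
      if snd e + snd f = d then smult (F i (e,f)) (Wt u h e f) else 0)"
    by (rule sum.cong[OF refl], rule sum.swap)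
  also have "\<dots> = (\<Sum>i\<in>I. \<Sum>e\<in>rbasis p. \<Sum>f\<in>rbasis p.
      if snd e + snd f = d then smult (F i (e,f)) (Wt u h e f) else 0)"
    by (rule sum.swap)
  finally show ?thesis unfolding Psi_def .
qed

lemma smult_sum_r: "smult c (\<Sum>i\<in>A. f i) = (\<Sum>i\<in>A. smult c (f i))"
  by (induction A rule: infinite_finite_induct) (auto simp: smult_add_right)

lemma Psi_smult: "Psi p u h d (\<lambda>x. c * F x) = smult c (Psi p u h d F)"
  unfolding Psi_def by (simp add: smult_sum_r if_distrib cong: if_cong)

definition Rm :: "nat \<Rightarrow> nat \<times> nat \<Rightarrow> nat \<times> nat \<Rightarrow> 'k::field rvec" where
  "Rm p a c = rmult p (rmon p (fst a) (snd a)) (rmon p (fst c) (snd c))"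

lemma R_val:
  assumes p: "p \<ge> 2" and a: "a \<in> rbasis p" and c: "c \<in> rbasis p" and e: "e \<in> rbasis p"
    and s: "snd a + snd c < p"
  shows "(snd a + snd c < snd e \<longrightarrow> (Rm p a c e :: 'k::field) = 0) \<and>
    (snd e = snd a + snd c \<longrightarrow> (Rm p a c e :: 'k) = (if fst e = (fst a + fst c) mod p then 1 else 0))"
proof -
  have "LD p (snd a + snd c) (monom 1 (fst a) * monom 1 (fst c)) (Rm p a c :: 'k rvec)"
    unfolding Rm_def using a c s by (intro LD_rmult[OF p] LD_rmon[OF p]) (auto simp: rbasis_def)
  thus ?thesis using e p unfolding LD_def DL_def
    by (cases e) (auto simp: rbasis_def mult_monom coeff_monom_mod)
qed

lemma sum_delta2_set: "x0 \<in> A \<Longrightarrow> y0 \<in> B \<Longrightarrow> finite A \<Longrightarrow> finite B \<Longrightarrow>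
  (\<Sum>x\<in>A. \<Sum>y\<in>B. if x = x0 \<and> y = y0 \<and> C then X else 0) = (if C then X else (0::'a::comm_monoid_add))"
proof -
  assume h: "x0 \<in> A" "y0 \<in> B" "finite A" "finite B"
  have "(\<Sum>x\<in>A. \<Sum>y\<in>B. if x = x0 \<and> y = y0 \<and> C then X else 0) = (\<Sum>x\<in>A. if x = x0 then (if C then X else 0) else 0)"
    by (intro sum.cong refl) (use h in auto)
  also have "\<dots> = (if C then X else 0)" using h by simp
  finally show ?thesis .
qed

lemma finite_rbasis: "finite (rbasis p)" by (simp add: rbasis_def)

lemma Psi_RR:
  assumes p: "p \<ge> 2" and B: "a \<in> rbasis p" "b \<in> rbasis p" "c \<in> rbasis p" "d \<in> rbasis p"
    and s1: "snd a + snd b \<le> d1" and s2: "snd c + snd d \<le> d2" and dd: "d1 + d2 < p"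
  shows "Psi p u h (d1 + d2) (\<lambda>(e,f). (Rm p a c e :: 'k::field) * Rm p b d f) =
    (if snd a + snd b = d1 \<and> snd c + snd d = d2
     then Wt u h ((fst a + fst c) mod p, snd a + snd c) ((fst b + fst d) mod p, snd b + snd d) else 0)"
proof -
  define E0 where "E0 = ((fst a + fst c) mod p, snd a + snd c)"
  define F0 where "F0 = ((fst b + fst d) mod p, snd b + snd d)"
  let ?C = "snd a + snd b = d1 \<and> snd c + snd d = d2"
  have E0B: "E0 \<in> rbasis p" "F0 \<in> rbasis p" using p s1 s2 dd by (auto simp: E0_def F0_def rbasis_def)
  have sac: "snd a + snd c < p" "snd b + snd d < p" using s1 s2 dd by auto
  have pt: "(if snd e + snd f = d1 + d2 then smult ((\<lambda>(e,f). (Rm p a c e :: 'k) * Rm p b d f) (e,f)) (Wt u h e f) else 0)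
      = (if e = E0 \<and> f = F0 \<and> ?C then Wt u h E0 F0 else 0)"
    if e: "e \<in> rbasis p" and f: "f \<in> rbasis p" for e f
  proof -
    note Re = R_val[OF p B(1) B(3) e sac(1)] and Rf = R_val[OF p B(2) B(4) f sac(2)]
    show ?thesis
    proof (cases "snd e + snd f = d1 + d2")
      case False
      thus ?thesis using s1 s2 by (auto simp: E0_def F0_def)
    next
      case T: True
      show ?thesis
      proof (cases "snd a + snd c < snd e \<or> snd b + snd d < snd f")
        case True
        thus ?thesis using Re Rf by (auto simp: E0_def F0_def)
      next
        case False
        hence eq: "snd e = snd a + snd c" "snd f = snd b + snd d" ?C using T s1 s2 by auto
        have "e = E0 \<longleftrightarrow> fst e = (fst a + fst c) mod p" using eq by (cases e) (auto simp: E0_def)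
        moreover have "f = F0 \<longleftrightarrow> fst f = (fst b + fst d) mod p" using eq by (cases f) (auto simp: F0_def)
        ultimately show ?thesis using Re Rf eq T by auto
      qed
    qed
  qed
  have "Psi p u h (d1 + d2) (\<lambda>(e,f). (Rm p a c e :: 'k) * Rm p b d f) =
     (\<Sum>e\<in>rbasis p. \<Sum>f\<in>rbasis p. if e = E0 \<and> f = F0 \<and> ?C then Wt u h E0 F0 else 0)"
    unfolding Psi_def by (intro sum.cong refl) (rule pt)
  also have "\<dots> = (if ?C then Wt u h E0 F0 else 0)"
    by (rule sum_delta2_set[OF E0B]) (simp_all add: finite_rbasis)
  finally show ?thesis by (simp add: E0_def F0_def)
qed

lemma one_mod_MM: "p \<ge> 2 \<Longrightarrow> (1::'k::field poly) mod MM p = 1"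
  by (intro mod_poly_less) (simp add: degree_MM)

lemma upow_mod:
  assumes p: "p \<ge> 2" and up: "u ^ p mod MM p = (1::'k::field poly)"
  shows "u ^ k mod MM p = u ^ (k mod p) mod MM p"
proof -
  have e: "u ^ k = (u ^ p) ^ (k div p) * u ^ (k mod p)"
  proof -
    have "u ^ k = u ^ (p * (k div p) + k mod p)" by simp
    also have "\<dots> = (u ^ p) ^ (k div p) * u ^ (k mod p)" by (simp only: power_add power_mult)
    finally show ?thesis .
  qed
  have "((u ^ p) ^ (k div p)) mod MM p = ((u ^ p mod MM p) ^ (k div p)) mod MM p"
    by (rule power_mod[symmetric])
  also have "\<dots> = 1" using p by (simp add: up one_mod_MM)
  finally have h: "((u ^ p) ^ (k div p)) mod MM p = 1" .
  have "u ^ k mod MM p = (((u ^ p) ^ (k div p)) mod MM p * u ^ (k mod p)) mod MM p"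
    unfolding e by (rule mod_mult_left_eq[symmetric])
  thus ?thesis unfolding h by simp
qed

lemma mod_mult_cong: "A mod M = A' mod M \<Longrightarrow> B mod M = B' mod M \<Longrightarrow> (A * B) mod M = (A' * B') mod (M::'k::field poly)"
  by (metis mod_mult_eq)

lemma Wt_mod:
  assumes p: "p \<ge> 2" and up: "u ^ p mod MM p = (1::'k::field poly)"
  shows "Wt u h ((fst a + fst c) mod p, snd a + snd c) ((fst b + fst d) mod p, snd b + snd d) mod MM p
    = (Wt u h a b * Wt u h c d) mod MM p"
proof -
  have m1: "monom (1::'k) ((fst b + fst d) mod p) mod MM p = monom 1 (fst b + fst d) mod MM p"
      by (simp add: monom_mod[OF p])
  have m2: "u ^ ((fst a + fst c) mod p) mod MM p = u ^ (fst a + fst c) mod MM p"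
    using upow_mod[OF p up, of "fst a + fst c"] by simp
  have "Wt u h ((fst a + fst c) mod p, snd a + snd c) ((fst b + fst d) mod p, snd b + snd d) mod MM p
     = (monom 1 (fst b + fst d) * u ^ (fst a + fst c) * h ^ (snd a + snd c)) mod MM p"
    unfolding Wt_def fst_conv snd_conv by (intro mod_mult_cong m1 m2 refl)
  also have "monom 1 (fst b + fst d) * u ^ (fst a + fst c) * h ^ (snd a + snd c) = Wt u h a b * Wt u h c d"
  proof -
    have mm: "monom (1::'k) (fst b + fst d) = monom 1 (fst b) * monom 1 (fst d)" by (simp add: mult_monom)
    show ?thesis unfolding Wt_def mm power_add by (simp only: mult_ac)
  qed
  finally show ?thesis .
qed

lemma tmult_expand: "tmult p U V = (\<lambda>x. \<Sum>a\<in>rbasis p. \<Sum>b\<in>rbasis p. \<Sum>c\<in>rbasis p. \<Sum>d\<in>rbasis p.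
   (U (a,b) * V (c,d)) * (\<lambda>(e,f). Rm p a c e * Rm p b d f) x)"
  by (rule ext) (auto simp: tmult_def Rm_def mult.assoc)

lemma TDL_le: "TDL p d T \<Longrightarrow> e \<in> rbasis p \<Longrightarrow> f \<in> rbasis p \<Longrightarrow> T (e,f) \<noteq> 0 \<Longrightarrow> snd e + snd f \<le> d"
  unfolding TDL_def by force

lemma sum_prod4: "(\<Sum>a\<in>A. \<Sum>b\<in>B. F a b) * (\<Sum>c\<in>C. \<Sum>d\<in>D. G c d) =
  (\<Sum>a\<in>A. \<Sum>b\<in>B. \<Sum>c\<in>C. \<Sum>d\<in>D. F a b * (G c d :: 'a::comm_semiring_1))"
  by (simp only: sum_distrib_right) (simp only: sum_distrib_left)

lemma LT_tmult:
  assumes p: "p \<ge> 2" and up: "u ^ p mod MM p = (1::'k::field poly)"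
    and U: "LT p u h d1 Q1 U" and V: "LT p u h d2 Q2 V" and dd: "d1 + d2 < p"
  shows "LT p u h (d1 + d2) (Q1 * Q2) (tmult p U V)"
proof -
  let ?B = "rbasis p"
  have TU: "TDL p d1 U" and TV: "TDL p d2 V" using U V by (auto simp: LT_def)
  have TD: "TDL p (d1 + d2) (tmult p U V)"
    unfolding TDL_def
  proof (intro ballI impI)
    fix e f assume e: "e \<in> ?B" and f: "f \<in> ?B" and lt: "d1 + d2 < snd e + snd f"
    have Z: "(U (a,b) * V (c,d)) * (Rm p a c e * Rm p b d f) = 0"
      if B: "a \<in> ?B" "b \<in> ?B" "c \<in> ?B" "d \<in> ?B" for a b c d
    proof (cases "U (a,b) = 0 \<or> V (c,d) = 0")
      case True thus ?thesis by auto
    next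
      case False
      hence s1: "snd a + snd b \<le> d1" and s2: "snd c + snd d \<le> d2"
        using TDL_le[OF TU B(1,2)] TDL_le[OF TV B(3,4)] by auto
      have sac: "snd a + snd c < p" "snd b + snd d < p" using s1 s2 dd by auto
      have "snd a + snd c < snd e \<or> snd b + snd d < snd f" using s1 s2 lt by auto
      thus ?thesis using R_val[OF p B(1) B(3) e sac(1)] R_val[OF p B(2) B(4) f sac(2)] by auto
    qed
    show "tmult p U V (e,f) = 0" unfolding tmult_expand
      by (intro sum.neutral ballI) (simp only: prod.case Z)
  qed
  let ?W = "\<lambda>a b c d. (if snd a + snd b = d1 \<and> snd c + snd d = d2 then Wt u h a b * Wt u h c d else 0)"
  have "Psi p u h (d1 + d2) (tmult p U V) = (\<Sum>a\<in>?B. \<Sum>b\<in>?B. \<Sum>c\<in>?B. \<Sum>d\<in>?B.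
     smult (U (a,b) * V (c,d)) (Psi p u h (d1 + d2) (\<lambda>(e,f). Rm p a c e * Rm p b d f)))"
    unfolding tmult_expand by (simp only: Psi_sum Psi_smult)
  also have "\<dots> mod MM p = (\<Sum>a\<in>?B. \<Sum>b\<in>?B. \<Sum>c\<in>?B. \<Sum>d\<in>?B.
     smult (U (a,b) * V (c,d)) (?W a b c d mod MM p))"
    unfolding mod_sum_poly mod_smult_left
  proof (intro sum.cong refl)
    fix a b c d assume B: "a \<in> ?B" "b \<in> ?B" "c \<in> ?B" "d \<in> ?B"
    show "smult (U (a,b) * V (c,d)) (Psi p u h (d1 + d2) (\<lambda>(e,f). Rm p a c e * Rm p b d f) mod MM p)
       = smult (U (a,b) * V (c,d)) (?W a b c d mod MM p)"
    proof (cases "U (a,b) = 0 \<or> V (c,d) = 0")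
      case True thus ?thesis by auto
    next
      case False
      hence s1: "snd a + snd b \<le> d1" and s2: "snd c + snd d \<le> d2"
        using TDL_le[OF TU B(1,2)] TDL_le[OF TV B(3,4)] by auto
      show ?thesis unfolding Psi_RR[OF p B s1 s2 dd] using Wt_mod[OF p up] by auto
    qed
  qed
  also have "\<dots> = (\<Sum>a\<in>?B. \<Sum>b\<in>?B. \<Sum>c\<in>?B. \<Sum>d\<in>?B.
     smult (U (a,b) * V (c,d)) (?W a b c d)) mod MM p"
    unfolding mod_sum_poly mod_smult_left ..
  also have "(\<Sum>a\<in>?B. \<Sum>b\<in>?B. \<Sum>c\<in>?B. \<Sum>d\<in>?B. smult (U (a,b) * V (c,d)) (?W a b c d))
     = Psi p u h d1 U * Psi p u h d2 V"
    unfolding Psi_def sum_prod4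
    by (intro sum.cong refl) (auto simp: mult_smult_left mult_smult_right mult.commute)
  also have "(Psi p u h d1 U * Psi p u h d2 V) mod MM p = (Q1 * Q2) mod MM p"
    using U V unfolding LT_def by (intro mod_mult_cong) auto
  finally show ?thesis unfolding LT_def using TD by simp
qed



lemma Psi_cong: "(\<And>e f. e \<in> rbasis p \<Longrightarrow> f \<in> rbasis p \<Longrightarrow> T (e,f) = T' (e,f)) \<Longrightarrow> Psi p u h d T = Psi p u h d T'"
  unfolding Psi_def by (intro sum.cong refl) auto

lemma Psi_add: "Psi p u h d (\<lambda>x. A x + B x) = Psi p u h d A + Psi p u h d B"
  unfolding Psi_def sum.distrib[symmetric] by (intro sum.cong refl) (simp add: smult_add_left)

definition dlt :: "nat \<times> nat \<Rightarrow> nat \<times> nat \<Rightarrow> 'k::field rtens" where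
  "dlt E F = (\<lambda>(e,f). if e = E \<and> f = F then 1 else 0)"

lemma Psi_dlt: "E \<in> rbasis p \<Longrightarrow> F \<in> rbasis p \<Longrightarrow>
  Psi p u h d (dlt E F) = (if snd E + snd F = d then Wt u h E F else 0)"
proof -
  assume EF: "E \<in> rbasis p" "F \<in> rbasis p"
  have "Psi p u h d (dlt E F) = (\<Sum>e\<in>rbasis p. \<Sum>f\<in>rbasis p. if e = E \<and> f = F \<and> snd E + snd F = d then Wt u h E F else 0)"
    unfolding Psi_def dlt_def by (intro sum.cong refl) auto
  also have "\<dots> = (if snd E + snd F = d then Wt u h E F else 0)"
    by (rule sum_delta2_set[OF EF]) (simp_all add: finite_rbasis)
  finally show ?thesis .
qed

lemma rmon_val': "p \<ge> 2 \<Longrightarrow> e \<in> rbasis p \<Longrightarrow> i < p \<Longrightarrow> j < p \<Longrightarrow> rmon p i j e = (if e = (i,j) then 1 else 0)"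
  by (cases e) (auto simp: rbasis_def rmon_val)

lemma LT_one: "p \<ge> 2 \<Longrightarrow> LT p u h 0 1 (rtensor (rone p) (rone p) :: 'k::field rtens)"
proof -
  assume p: "p \<ge> 2"
  have B: "(0,0) \<in> rbasis p" using p by (simp add: rbasis_def)
  have eq: "rtensor (rone p) (rone p) (e,f) = (dlt (0,0) (0,0) (e,f) :: 'k)" if "e \<in> rbasis p" "f \<in> rbasis p" for e f
    using that p by (simp add: rtensor_def rone_def rmon_val' dlt_def)
  have "Psi p u h 0 (rtensor (rone p) (rone p) :: 'k rtens) = Psi p u h 0 (dlt (0,0) (0,0))"
    by (rule Psi_cong) (simp add: eq)
  hence "Psi p u h 0 (rtensor (rone p) (rone p) :: 'k rtens) = 1"
    using Psi_dlt[OF B B, of u h 0] by (simp add: Wt_def one_pCons[symmetric] monom_0)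
  moreover have "TDL p 0 (rtensor (rone p) (rone p) :: 'k rtens)"
    unfolding TDL_def using eq by (auto simp: dlt_def)
  ultimately show ?thesis by (simp add: LT_def)
qed

lemma LT_DG: "p \<ge> 2 \<Longrightarrow> LT p u h 0 (monom 1 1 * u) (DeltaG p :: 'k::field rtens)"
proof -
  assume p: "p \<ge> 2"
  have B: "(1,0) \<in> rbasis p" using p by (simp add: rbasis_def)
  have eq: "DeltaG p (e,f) = (dlt (1,0) (1,0) (e,f) :: 'k)" if "e \<in> rbasis p" "f \<in> rbasis p" for e f
    using that p by (simp add: DeltaG_def rtensor_def rG_def rmon_val' dlt_def)
  have "Psi p u h 0 (DeltaG p :: 'k rtens) = Psi p u h 0 (dlt (1,0) (1,0))"
    by (rule Psi_cong) (simp add: eq)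
  hence "Psi p u h 0 (DeltaG p :: 'k rtens) = monom 1 1 * u"
    using Psi_dlt[OF B B, of u h 0] by (simp add: Wt_def)
  moreover have "TDL p 0 (DeltaG p :: 'k rtens)"
    unfolding TDL_def using eq by (auto simp: dlt_def)
  ultimately show ?thesis by (simp add: LT_def)
qed

lemma LT_DX: "p \<ge> 2 \<Longrightarrow> LT p u h 1 (h + u) (DeltaX p :: 'k::field rtens)"
proof -
  assume p: "p \<ge> 2"
  have B: "(1,0) \<in> rbasis p" "(0,1) \<in> rbasis p" "(0,0) \<in> rbasis p" using p by (auto simp: rbasis_def)
  have eq: "DeltaX p (e,f) = (dlt (0,1) (0,0) (e,f) + dlt (1,0) (0,1) (e,f) :: 'k)"
    if "e \<in> rbasis p" "f \<in> rbasis p" for e f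
    using that p by (simp add: DeltaX_def rtensor_def rG_def rX_def rone_def rmon_val' dlt_def)
  have "Psi p u h 1 (DeltaX p :: 'k rtens) = Psi p u h 1 (\<lambda>x. dlt (0,1) (0,0) x + dlt (1,0) (0,1) x)"
    by (rule Psi_cong) (simp add: eq)
  also have "\<dots> = h + u"
    unfolding Psi_add using Psi_dlt[OF B(2) B(3), of u h 1] Psi_dlt[OF B(1) B(2), of u h 1]
    by (simp add: Wt_def one_pCons[symmetric] monom_0)
  finally have "Psi p u h 1 (DeltaX p :: 'k rtens) = h + u" .
  moreover have "TDL p 1 (DeltaX p :: 'k rtens)"
    unfolding TDL_def using eq by (auto simp: dlt_def)
  ultimately show ?thesis by (simp add: LT_def)
qed

lemma LT_tpow:
  assumes p: "p \<ge> 2" and up: "u ^ p mod MM p = (1::'k::field poly)" and T: "LT p u h d P T"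
  shows "d * k < p \<Longrightarrow> LT p u h (d * k) (P ^ k) (tpow p T k)"
proof (induction k)
  case 0 thus ?case using LT_one[OF p] by (simp add: tpow_def)
next
  case (Suc k)
  have "d * k \<le> d * Suc k" by simp
  hence "LT p u h (d + d * k) (P * P ^ k) (tmult p T (tpow p T k))"
    using Suc by (intro LT_tmult[OF p up T]) auto
  thus ?case by (simp add: tpow_def)
qed

lemma rDelta_rmon:
  assumes p: "p \<ge> 2" and a: "a < p" and d: "d < p"
  shows "rDelta p (rmon p a d) = (tmult p (tpow p (DeltaG p) a) (tpow p (DeltaX p) d) :: 'k::field rtens)"
proof (rule ext)
  fix x
  have "rDelta p (rmon p a d) x = (\<Sum>i<p. \<Sum>j<p. if i = a \<and> j = d then
      (tmult p (tpow p (DeltaG p) i) (tpow p (DeltaX p) j) x :: 'k) else 0)"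
    unfolding rDelta_def sum_rbasis by (intro sum.cong refl) (use a d in \<open>auto simp: rmon_val[OF p]\<close>)
  also have "\<dots> = tmult p (tpow p (DeltaG p) a) (tpow p (DeltaX p) d) x"
    by (rule sum_delta2[OF a d])
  finally show "rDelta p (rmon p a d) x = (tmult p (tpow p (DeltaG p) a) (tpow p (DeltaX p) d) x :: 'k)" .
qed

lemma LT_Delta:
  assumes p: "p \<ge> 2" and up: "u ^ p mod MM p = (1::'k::field poly)" and a: "a < p" and d: "d < p"
  shows "LT p u h d ((monom 1 1 * u) ^ a * (h + u) ^ d) (rDelta p (rmon p a d) :: 'k rtens)"
proof -
  have "LT p u h (0 * a + 1 * d) ((monom 1 1 * u) ^ a * (h + u) ^ d)
     (tmult p (tpow p (DeltaG p) a) (tpow p (DeltaX p) d))"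
    using d by (intro LT_tmult[OF p up] LT_tpow[OF p up] LT_DG[OF p] LT_DX[OF p]) auto
  moreover have e: "rDelta p (rmon p a d) = (tmult p (tpow p (DeltaG p) a) (tpow p (DeltaX p) d) :: 'k rtens)"
    by (rule rDelta_rmon[OF p a d])
  ultimately show ?thesis by simp
qed



definition Lm :: "nat \<Rightarrow> nat \<Rightarrow> (nat \<times> nat) list set" where
  "Lm p m = {bs. set bs \<subseteq> rbasis p \<and> length bs = m}"

lemma finite_Lm: "finite (Lm p m)"
  unfolding Lm_def by (rule finite_lists_length_eq) (simp add: finite_rbasis)

lemma Lm_Suc: "Lm p (Suc m) = (\<lambda>(bs,l). bs @ [l]) ` (Lm p m \<times> rbasis p)"
proof
  show "Lm p (Suc m) \<subseteq> (\<lambda>(bs,l). bs @ [l]) ` (Lm p m \<times> rbasis p)"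
  proof
    fix xs assume xs: "xs \<in> Lm p (Suc m)"
    hence ne: "xs \<noteq> []" by (auto simp: Lm_def)
    hence e: "xs = butlast xs @ [last xs]" by simp
    have "set (butlast xs) \<subseteq> rbasis p" "last xs \<in> rbasis p"
      using xs ne by (auto simp: Lm_def dest: in_set_butlastD)
    moreover have "length (butlast xs) = m" using xs by (auto simp: Lm_def)
    ultimately have "(butlast xs, last xs) \<in> Lm p m \<times> rbasis p" by (auto simp: Lm_def)
    thus "xs \<in> (\<lambda>(bs,l). bs @ [l]) ` (Lm p m \<times> rbasis p)" using e by force
  qed
qed (auto simp: Lm_def)

lemma sum_Lm_Suc: "(\<Sum>bs\<in>Lm p (Suc m). f bs) = (\<Sum>bs\<in>Lm p m. \<Sum>l\<in>rbasis p. f (bs @ [l]))"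
proof -
  have inj: "inj_on (\<lambda>(bs,l). bs @ [l]) (Lm p m \<times> rbasis p)"
    by (auto simp: inj_on_def)
  show ?thesis unfolding Lm_Suc sum.reindex[OF inj]
    by (simp add: sum.cartesian_product[symmetric] prod.case_distrib)
qed

definition Phi :: "nat \<Rightarrow> nat \<Rightarrow> nat \<Rightarrow> ((nat \<times> nat) list \<Rightarrow> 'k::field) \<Rightarrow> 'k poly" where
  "Phi p m d T = (\<Sum>bs\<in>Lm p m. if xdeg bs = d then smult (T bs) (monom 1 (gsum bs)) else 0)"

definition LL :: "nat \<Rightarrow> nat \<Rightarrow> nat \<Rightarrow> 'k::field poly \<Rightarrow> ((nat \<times> nat) list \<Rightarrow> 'k) \<Rightarrow> bool" where
  "LL p m d Q T = ((\<forall>bs\<in>Lm p m. d < xdeg bs \<longrightarrow> T bs = 0) \<and> Phi p m d T mod MM p = Q mod MM p)"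

definition Gm :: "nat \<Rightarrow> 'k::field poly" where "Gm m = (\<Sum>k<m. monom 1 k)"

lemma LD_P:
  fixes T :: "(nat \<times> nat) list \<Rightarrow> 'k::field"
  assumes p: "p \<ge> 2" and T: "LL p m d Q T" and d: "d < p"
  shows "LD p d Q (\<lambda>b. \<Sum>bs\<in>Lm p m. T bs * rprod p bs b)"
proof -
  have T0: "T bs = 0" if "bs \<in> Lm p m" "d < xdeg bs" for bs using T that by (auto simp: LL_def)
  have LDbs: "LD p (xdeg bs) (monom 1 (gsum bs)) (rprod p bs :: 'k rvec)" if "bs \<in> Lm p m" "xdeg bs \<le> d" for bs
    using that d by (intro LD_rprod[OF p]) (auto simp: Lm_def)
  have DLP: "DL p d (\<lambda>b. \<Sum>bs\<in>Lm p m. T bs * rprod p bs b)"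
    unfolding DL_def
  proof (intro allI impI)
    fix a j assume a: "a < p" and j: "j < p" and dj: "d < j"
    show "(\<Sum>bs\<in>Lm p m. T bs * rprod p bs (a,j)) = 0"
    proof (intro sum.neutral ballI)
      fix bs assume bs: "bs \<in> Lm p m"
      show "T bs * rprod p bs (a,j) = 0"
      proof (cases "d < xdeg bs")
        case True thus ?thesis using T0 bs by simp
      next
        case False
        thus ?thesis using LDbs[OF bs] a j dj unfolding LD_def DL_def by auto
      qed
    qed
  qed
  have lead: "(\<Sum>bs\<in>Lm p m. T bs * rprod p bs (a,d)) = coeff (Q mod MM p) a" if a: "a < p" for a
  proof -
    have "(\<Sum>bs\<in>Lm p m. T bs * rprod p bs (a,d)) =
       (\<Sum>bs\<in>Lm p m. if xdeg bs = d then T bs * coeff (monom 1 (gsum bs) mod MM p) a else 0)"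
    proof (intro sum.cong refl)
      fix bs assume bs: "bs \<in> Lm p m"
      consider "d < xdeg bs" | "xdeg bs < d" | "xdeg bs = d" by linarith
      thus "T bs * rprod p bs (a,d) = (if xdeg bs = d then T bs * coeff (monom 1 (gsum bs) mod MM p) a else 0)"
      proof cases
        case 1 thus ?thesis using T0 bs by simp
      next
        case 2 thus ?thesis using LDbs[OF bs] a d unfolding LD_def DL_def by auto
      next
        case 3 thus ?thesis using LDbs[OF bs] a d unfolding LD_def by auto
      qed
    qed
    also have "\<dots> = coeff (Phi p m d T mod MM p) a"
      unfolding Phi_def mod_sum_poly coeff_sum
      by (intro sum.cong refl) (simp add: mod_smult_left)
    also have "\<dots> = coeff (Q mod MM p) a" using T by (simp add: LL_def)
    finally show ?thesis .
  qed
  show ?thesis unfolding LD_def using DLP lead by auto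
qed

lemma xdeg_snoc: "xdeg (bs @ [l]) = xdeg bs + snd l" by (simp add: xdeg_def)
lemma gsum_snoc: "gsum (bs @ [l]) = gsum bs + fst l" by (simp add: gsum_def)

lemma rDeltan_snoc: "rDeltan p (Suc (Suc k)) v (bs @ [l]) =
   (\<Sum>c\<in>rbasis p. rDelta p v (c, l) * rDeltan p (Suc k) (rmon p (fst c) (snd c)) bs)"
  by simp

lemma Gm_Suc: "Gm (Suc m) = Gm m + monom 1 m" by (simp add: Gm_def)

lemma Gm_1: "Gm 1 = 1" by (simp add: Gm_def one_pCons[symmetric] monom_0)

lemma sum_swap3: "(\<Sum>x\<in>A. \<Sum>y\<in>B. \<Sum>z\<in>C. f x y z) = (\<Sum>z\<in>C. \<Sum>y\<in>B. \<Sum>x\<in>A. f x y z)"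
proof -
  have "(\<Sum>x\<in>A. \<Sum>y\<in>B. \<Sum>z\<in>C. f x y z) = (\<Sum>x\<in>A. \<Sum>z\<in>C. \<Sum>y\<in>B. f x y z)"
    by (rule sum.cong[OF refl], rule sum.swap)
  also have "\<dots> = (\<Sum>z\<in>C. \<Sum>x\<in>A. \<Sum>y\<in>B. f x y z)" by (rule sum.swap)
  also have "\<dots> = (\<Sum>z\<in>C. \<Sum>y\<in>B. \<Sum>x\<in>A. f x y z)" by (rule sum.cong[OF refl], rule sum.swap)
  finally show ?thesis .
qed

lemma sum_singleton: "(\<Sum>x\<in>{a}. f x) = f a" by simp

lemma LL_base:
  assumes p: "p \<ge> 2" and a: "a < p" and d: "d < p"
  shows "LL p 1 d (monom 1 (1 * a) * Gm 1 ^ d) (rDeltan p 1 (rmon p a d) :: _ \<Rightarrow> 'k::field)"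
proof -
  have Lm0: "Lm p 0 = {[]}" by (auto simp: Lm_def)
  have val: "rDeltan p 1 (rmon p a d) [l] = (if l = (a,d) then 1 else (0::'k))" if "l \<in> rbasis p" for l
    using that a d p by (simp add: rmon_val')
  have "\<forall>bs\<in>Lm p 1. d < xdeg bs \<longrightarrow> (rDeltan p 1 (rmon p a d) bs :: 'k) = 0"
  proof
    fix bs assume "bs \<in> Lm p 1"
    then obtain l where bs: "bs = [l]" "l \<in> rbasis p" by (auto simp: Lm_def length_Suc_conv)
    thus "d < xdeg bs \<longrightarrow> (rDeltan p 1 (rmon p a d) bs :: 'k) = 0" using val[OF bs(2)] by (cases l) (auto simp: xdeg_def)
  qed
  moreover have "Phi p 1 d (rDeltan p 1 (rmon p a d) :: _ \<Rightarrow> 'k) = monom 1 a"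
  proof -
    have "Phi p 1 d (rDeltan p 1 (rmon p a d) :: _ \<Rightarrow> 'k) =
      (\<Sum>l\<in>rbasis p. if l = (a,d) then monom 1 a else 0)"
      unfolding Phi_def One_nat_def sum_Lm_Suc Lm0 sum_singleton append_Nil
      by (intro sum.cong refl) (use a d p in \<open>auto simp: rmon_val' xdeg_def gsum_def\<close>)
    also have "\<dots> = monom 1 a" using a d by (simp add: rbasis_def)
    finally show ?thesis .
  qed
  moreover have "Gm (Suc 0) = (1::'k poly)" using Gm_1 by simp
  ultimately show ?thesis by (simp add: LL_def)
qed

lemma LL_step:
  assumes p: "p \<ge> 2" and m: "m \<ge> 1"
    and IH: "\<And>a d. a < p \<Longrightarrow> d < p \<Longrightarrow>
       LL p m d (monom 1 (m * a) * Gm m ^ d) (rDeltan p m (rmon p a d) :: _ \<Rightarrow> 'k::field)"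
    and a: "a < p" and d: "d < p"
  shows "LL p (Suc m) d (monom 1 (Suc m * a) * Gm (Suc m) ^ d) (rDeltan p (Suc m) (rmon p a d) :: _ \<Rightarrow> 'k)"
proof -
  obtain k where mk: "m = Suc k" using m by (cases m) auto
  let ?u = "monom 1 m :: 'k poly" and ?h = "Gm m :: 'k poly"
  let ?D = "rDelta p (rmon p a d) :: 'k rtens"
  let ?T = "\<lambda>c. rDeltan p m (rmon p (fst c) (snd c)) :: _ \<Rightarrow> 'k"
  have up: "?u ^ p mod MM p = 1"
    using monom_mod[OF p, of "m * p"] by (simp add: monom_power)
  have LTD: "LT p ?u ?h d ((monom 1 1 * ?u) ^ a * (?h + ?u) ^ d) ?D"
    by (rule LT_Delta[OF p up a d])
  have TD: "TDL p d ?D" using LTD by (simp add: LT_def)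
  have IHc: "LL p m (snd c) (monom 1 (m * fst c) * Gm m ^ snd c) (?T c)" if "c \<in> rbasis p" for c
    using that IH by (cases c) (auto simp: rbasis_def)
  have T0: "?T c bs = 0" if "c \<in> rbasis p" "bs \<in> Lm p m" "snd c < xdeg bs" for c bs
    using IHc[OF that(1)] that by (auto simp: LL_def)
  have snoc: "rDeltan p (Suc m) (rmon p a d) (bs @ [l]) = (\<Sum>c\<in>rbasis p. ?D (c, l) * ?T c bs)" for bs l
    unfolding mk by (rule rDeltan_snoc)
  have DEG: "\<forall>bs\<in>Lm p (Suc m). d < xdeg bs \<longrightarrow> (rDeltan p (Suc m) (rmon p a d) bs :: 'k) = 0"
  proof (intro ballI impI)
    fix bs' assume bs': "bs' \<in> Lm p (Suc m)" and lt: "d < xdeg bs'"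
    then obtain bs l where e: "bs' = bs @ [l]" and bs: "bs \<in> Lm p m" and l: "l \<in> rbasis p"
      unfolding Lm_Suc by auto
    show "(rDeltan p (Suc m) (rmon p a d) bs' :: 'k) = 0" unfolding e snoc
    proof (intro sum.neutral ballI)
      fix c assume c: "c \<in> rbasis p"
      show "?D (c, l) * ?T c bs = 0"
      proof (cases "d < snd c + snd l")
        case True thus ?thesis using TD c l by (simp add: TDL_def)
      next
        case False
        hence "snd c < xdeg bs" using lt e by (simp add: xdeg_snoc)
        thus ?thesis using T0[OF c bs] by simp
      qed
    qed
  qed
  have inner: "(\<Sum>bs\<in>Lm p m. if xdeg bs + snd l = d then smult (?D (c,l) * ?T c bs) (monom 1 (gsum bs + fst l)) else 0)
      = (if snd c + snd l = d then smult (?D (c,l)) (monom 1 (fst l) * Phi p m (snd c) (?T c)) else 0)"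
    if c: "c \<in> rbasis p" and l: "l \<in> rbasis p" for c l
  proof -
    consider "d < snd c + snd l" | "snd c + snd l < d" | "snd c + snd l = d" by linarith
    thus ?thesis
    proof cases
      case 1
      hence D0: "?D (c,l) = 0" using TD c l by (simp add: TDL_def)
      have "(\<Sum>bs\<in>Lm p m. if xdeg bs + snd l = d then smult (?D (c,l) * ?T c bs) (monom 1 (gsum bs + fst l)) else 0) = 0"
        by (intro sum.neutral ballI) (simp add: D0)
      thus ?thesis using 1 by simp
    next
      case 2
      have "(if xdeg bs + snd l = d then smult (?D (c,l) * ?T c bs) (monom 1 (gsum bs + fst l)) else 0) = 0"
        if bs: "bs \<in> Lm p m" for bs
        using T0[OF c bs] 2 by auto
      thus ?thesis using 2 by (simp add: sum.neutral)
    next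
      case 3
      have "(\<Sum>bs\<in>Lm p m. if xdeg bs + snd l = d then smult (?D (c,l) * ?T c bs) (monom 1 (gsum bs + fst l)) else 0)
         = (\<Sum>bs\<in>Lm p m. smult (?D (c,l)) (monom 1 (fst l) * (if xdeg bs = snd c then smult (?T c bs) (monom 1 (gsum bs)) else 0)))"
        using 3 by (intro sum.cong refl) (auto simp: mult_monom add.commute)
      also have "\<dots> = smult (?D (c,l)) (monom 1 (fst l) * Phi p m (snd c) (?T c))"
        unfolding Phi_def by (simp add: smult_sum_r sum_distrib_left)
      finally show ?thesis using 3 by simp
    qed
  qed
  have "Phi p (Suc m) d (rDeltan p (Suc m) (rmon p a d)) =
     (\<Sum>bs\<in>Lm p m. \<Sum>l\<in>rbasis p. \<Sum>c\<in>rbasis p.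
        if xdeg bs + snd l = d then smult (?D (c,l) * ?T c bs) (monom 1 (gsum bs + fst l)) else 0)"
    unfolding Phi_def sum_Lm_Suc xdeg_snoc gsum_snoc snoc
    by (intro sum.cong refl) (simp add: smult_sum if_distrib sum.If_cases)
  also have "\<dots> = (\<Sum>c\<in>rbasis p. \<Sum>l\<in>rbasis p. \<Sum>bs\<in>Lm p m.
        if xdeg bs + snd l = d then smult (?D (c,l) * ?T c bs) (monom 1 (gsum bs + fst l)) else 0)"
    by (rule sum_swap3)
  also have "\<dots> = (\<Sum>c\<in>rbasis p. \<Sum>l\<in>rbasis p.
        if snd c + snd l = d then smult (?D (c,l)) (monom 1 (fst l) * Phi p m (snd c) (?T c)) else 0)"
    by (intro sum.cong refl inner)
  finally have PhiE: "Phi p (Suc m) d (rDeltan p (Suc m) (rmon p a d)) = \<dots>" .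
  have "Phi p (Suc m) d (rDeltan p (Suc m) (rmon p a d)) mod MM p = Psi p ?u ?h d ?D mod MM p"
    unfolding PhiE Psi_def mod_sum_poly
  proof (intro sum.cong refl)
    fix c l assume c: "c \<in> rbasis p" and l: "l \<in> rbasis p"
    have "(monom 1 (fst l) * Phi p m (snd c) (?T c)) mod MM p
        = (monom 1 (fst l) * (monom 1 (m * fst c) * Gm m ^ snd c)) mod MM p"
      using IHc[OF c] by (intro mod_mult_cong refl) (simp add: LL_def)
    also have "monom 1 (fst l) * (monom 1 (m * fst c) * Gm m ^ snd c) = Wt ?u ?h c l"
      by (simp add: Wt_def monom_power mult.assoc mult.commute)
    finally show "(if snd c + snd l = d then smult (?D (c,l)) (monom 1 (fst l) * Phi p m (snd c) (?T c)) else 0) mod MM p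
       = (if snd c + snd l = d then smult (?D (c,l)) (Wt ?u ?h c l) else 0) mod MM p"
      by (simp add: mod_smult_left)
  qed
  also have "\<dots> = ((monom 1 1 * ?u) ^ a * (?h + ?u) ^ d) mod MM p" using LTD by (simp add: LT_def)
  also have "(monom 1 1 * ?u) ^ a * (?h + ?u) ^ d = monom 1 (Suc m * a) * Gm (Suc m) ^ d"
    by (simp add: mult_monom monom_power Gm_Suc mult.commute)
  finally show ?thesis unfolding LL_def using DEG by simp
qed

lemma LL_Deltan:
  assumes p: "p \<ge> 2"
  shows "m \<ge> 1 \<Longrightarrow> a < p \<Longrightarrow> d < p \<Longrightarrow>
    LL p m d (monom 1 (m * a) * Gm m ^ d) (rDeltan p m (rmon p a d) :: _ \<Rightarrow> 'k::field)"
proof (induction m arbitrary: a d rule: nat_induct_at_least)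
  case base thus ?case using LL_base[OF p] by blast
next
  case (Suc m) thus ?case using LL_step[OF p Suc.hyps(1)] by blast
qed



lemma sum_perm: "inj_on (f::nat\<Rightarrow>nat) {..<(p::nat)} \<Longrightarrow> (\<And>i. i < p \<Longrightarrow> f i < p) \<Longrightarrow> (\<Sum>i<p. g (f i)) = (\<Sum>i<p. g i)"
proof -
  assume inj: "inj_on f {..<p}" and r: "\<And>i. i < p \<Longrightarrow> f i < p"
  have im: "f ` {..<p} = {..<p}" by (rule endo_inj_surj) (use inj r in auto)
  have "(\<Sum>i<p. g i) = sum g (f ` {..<p})" unfolding im ..
  also have "\<dots> = (\<Sum>i<p. g (f i))" by (simp add: sum.reindex[OF inj])
  finally show ?thesis by simp
qed

lemma inj_add_mod: "inj_on (\<lambda>i. (i + k) mod p) {..<(p::nat)}"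
proof (rule inj_onI)
  fix i i' assume i: "i \<in> {..<p}" and i': "i' \<in> {..<p}" and e: "(i + k) mod p = (i' + k) mod p"
  show "i = i'"
  proof (rule ccontr)
    assume ne: "i \<noteq> i'"
    { fix x y :: nat assume x: "x < p" and y: "y < p" and xy: "x < y" and e: "(x + k) mod p = (y + k) mod p"
      have "p dvd (y + k) - (x + k)" using e xy by (subst mod_eq_dvd_iff_nat[symmetric]) auto
      hence "p dvd y - x" by simp
      moreover have "0 < y - x" "y - x < p" using x y xy by auto
      ultimately have False using nat_dvd_not_less by blast } note H = this
    show False
    proof (cases "i < i'")
      case True thus False using H[of i i'] i i' e by auto
    next
      case False hence "i' < i" using ne by auto
      thus False using H[of i' i] i i' e by auto
    qed
  qed
qed

lemma inj_mult_mod: "prime p \<Longrightarrow> \<not> p dvd n \<Longrightarrow> inj_on (\<lambda>i. (n * i) mod p) {..<(p::nat)}"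
proof (rule inj_onI)
  assume p: "prime p" and n: "\<not> p dvd n"
  fix i i' assume i: "i \<in> {..<p}" and i': "i' \<in> {..<p}" and e: "(n * i) mod p = (n * i') mod p"
  show "i = i'"
  proof (rule ccontr)
    assume ne: "i \<noteq> i'"
    { fix x y :: nat assume x: "x < p" and y: "y < p" and xy: "x < y" and e: "(n * x) mod p = (n * y) mod p"
      have "p dvd n * y - n * x" using e xy by (subst mod_eq_dvd_iff_nat[symmetric]) auto
      hence "p dvd n * (y - x)" by (simp add: diff_mult_distrib2)
      hence "p dvd y - x" using n p by (simp add: prime_dvd_mult_iff)
      moreover have "0 < y - x" "y - x < p" using x y xy by auto
      ultimately have False using nat_dvd_not_less by blast } note H = this
    show False
    proof (cases "i < i'")
      case True thus False using H[of i i'] i i' e by auto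
    next
      case False hence "i' < i" using ne by auto
      thus False using H[of i' i] i i' e by auto
    qed
  qed
qed

definition E0 :: "nat \<Rightarrow> 'k::field poly" where "E0 p = (\<Sum>i<p. monom 1 i)"

lemma E0_shift: "p \<ge> 2 \<Longrightarrow> (E0 p * monom 1 k) mod MM p = (E0 p :: 'k::field poly)"
proof -
  assume p: "p \<ge> 2"
  have "(E0 p * monom 1 k) mod MM p = (\<Sum>i<p. monom (1::'k) ((i + k) mod p))"
    unfolding E0_def sum_distrib_right mod_sum_poly by (simp add: mult_monom monom_mod[OF p])
  also have "\<dots> = E0 p" unfolding E0_def
    by (rule sum_perm[OF inj_add_mod, of p k "monom 1"]) (use p in auto)
  finally show ?thesis .
qed

lemma E0_mult:
  assumes p: "p \<ge> 2"
  shows "(E0 p * A) mod MM p = smult (poly A 1) (E0 p :: 'k::field poly)"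
proof -
  have "E0 p * A = E0 p * (\<Sum>k\<le>degree A. monom (coeff A k) k)" by (simp add: poly_as_sum_of_monoms)
  also have "\<dots> = (\<Sum>k\<le>degree A. smult (coeff A k) (E0 p * monom 1 k))"
    unfolding sum_distrib_left
    by (intro sum.cong refl) (simp only: mult.commute[of "E0 p"] monom_mult_smult[of "coeff A _"])
  finally have "(E0 p * A) mod MM p = (\<Sum>k\<le>degree A. smult (coeff A k) ((E0 p * monom 1 k) mod MM p))"
    by (simp add: mod_sum_poly mod_smult_left)
  also have "\<dots> = (\<Sum>k\<le>degree A. smult (coeff A k) (E0 p))" by (simp add: E0_shift[OF p])
  also have "\<dots> = smult (poly A 1) (E0 p)" by (simp add: smult_sum poly_altdef)
  finally show ?thesis .
qed

lemma coeff_E0: "p \<ge> 1 \<Longrightarrow> coeff (E0 p :: 'k::field poly) 0 = 1"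
  unfolding E0_def coeff_sum by (simp add: coeff_monom)

lemma E_mod_ndvd: "prime p \<Longrightarrow> \<not> p dvd n \<Longrightarrow> (\<Sum>i<p. monom 1 (n * i)) mod MM p = (E0 p :: 'k::field poly)"
proof -
  assume pp: "prime p" and n: "\<not> p dvd n"
  have p: "p \<ge> 2" using pp by (simp add: prime_ge_2_nat)
  have "(\<Sum>i<p. monom 1 (n * i)) mod MM p = (\<Sum>i<p. monom (1::'k) ((n * i) mod p))"
    by (simp add: mod_sum_poly monom_mod[OF p])
  also have "\<dots> = E0 p" unfolding E0_def
    by (rule sum_perm[OF inj_mult_mod[OF pp n], of "monom 1"]) (use p in auto)
  finally show ?thesis .
qed

lemma E_mod_dvd:
  assumes pp: "prime p" and n: "p dvd n" and ch: "CHAR('k::field) = p"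
  shows "(\<Sum>i<p. monom 1 (n * i)) mod MM p = (0 :: 'k poly)"
proof -
  have p: "p \<ge> 2" using pp by (simp add: prime_ge_2_nat)
  have "(\<Sum>i<p. monom 1 (n * i)) mod MM p = (\<Sum>i<p. monom (1::'k) ((n * i) mod p))"
    by (simp add: mod_sum_poly monom_mod[OF p])
  also have "\<dots> = (\<Sum>i<p. 1)" using n by (simp add: one_pCons[symmetric] monom_0)
  also have "\<dots> = of_nat p" by simp
  also have "(of_nat p :: 'k poly) = 0" using ch by (simp add: of_nat_eq_0_iff_char_dvd)
  finally show ?thesis .
qed

lemma frob_nat: "prime CHAR('k::comm_ring_1) \<Longrightarrow> (of_nat m :: 'k) ^ CHAR('k) = of_nat m"
proof (induction m)
  case 0 thus ?case by (simp add: power_0_left)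
next
  case (Suc m)
  have "(1 + of_nat m :: 'k) ^ CHAR('k) = 1 ^ CHAR('k) + of_nat m ^ CHAR('k)"
    using Suc by (intro freshmans_dream) auto
  thus ?case using Suc by simp
qed

lemma geom_char:
  assumes pp: "prime p" and ch: "CHAR('k::field) = p" and n: "\<not> p dvd Suc m"
  shows "(\<Sum>j<p. (- of_nat m :: 'k) ^ j) = 1"
proof -
  let ?x = "- of_nat m :: 'k"
  have pc: "prime CHAR('k)" using pp ch by simp
  have "?x ^ p = - (of_nat m ^ p)" using minus_power_prime_CHAR[where x = "of_nat m :: 'k" and p = p] pp ch by simp
  also have "of_nat m ^ p = (of_nat m :: 'k)" using frob_nat[OF pc, of m] ch by simp
  finally have xp: "?x ^ p = ?x" .
  have "?x ^ p - 1 = (?x - 1) * (\<Sum>j<p. ?x ^ j)" by (rule power_diff_1_eq)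
  hence e: "(?x - 1) * (\<Sum>j<p. ?x ^ j) = (?x - 1) * 1" using xp by simp
  have "?x - 1 = - of_nat (Suc m)" by simp
  moreover have "(of_nat (Suc m) :: 'k) \<noteq> 0" using n ch of_nat_eq_0_iff_char_dvd[of "Suc m", where 'a='k] by simp
  ultimately have "?x - 1 \<noteq> 0" by (metis neg_equal_0_iff_equal)
  thus ?thesis using e by simp
qed



lemma reps_rmon: "p \<ge> 2 \<Longrightarrow> i < p \<Longrightarrow> j < p \<Longrightarrow> reps p (rmon p i j) = (if j = 0 then 1 else (0::'k::field))"
proof -
  assume p: "p \<ge> 2" and i: "i < p" and j: "j < p"
  have "reps p (rmon p i j) = (\<Sum>a<p. \<Sum>b<p. if a = i \<and> b = j then (if b = 0 then 1 else (0::'k)) else 0)"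
    unfolding reps_def sum_rbasis by (intro sum.cong refl) (use i j in \<open>auto simp: rmon_val[OF p]\<close>)
  also have "\<dots> = (if j = 0 then 1 else 0)" by (rule sum_delta2[OF i j])
  finally show ?thesis .
qed

lemma LD_rP:
  assumes p: "p \<ge> 2" and i: "i < p" and j: "j < p"
  shows "LD p j (monom 1 (m * i) * Gm m ^ j) (rP p m (rmon p i j) :: 'k::field rvec)"
proof (cases "m = 0")
  case True
  show ?thesis
  proof (cases "j = 0")
    case True
    have "rP p m (rmon p i j) = (rone p :: 'k rvec)"
      using \<open>m = 0\<close> True reps_rmon[OF p i j, where 'k='k] by (simp add: rP_def)
    thus ?thesis using LD_rone[OF p] \<open>m = 0\<close> True by (simp add: one_pCons[symmetric] monom_0)
  next
    case False
    have "rP p m (rmon p i j) = (\<lambda>b. 0 :: 'k)"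
      using \<open>m = 0\<close> False reps_rmon[OF p i j, where 'k='k] by (simp add: rP_def)
    thus ?thesis using \<open>m = 0\<close> False by (simp add: LD_def DL_def Gm_def power_0_left)
  qed
next
  case False
  have LL: "LL p m j (monom 1 (m * i) * Gm m ^ j) (rDeltan p m (rmon p i j) :: _ \<Rightarrow> 'k)"
    using False i j by (intro LL_Deltan[OF p]) auto
  have "rP p m (rmon p i j) = (\<lambda>b. \<Sum>bs\<in>Lm p m. rDeltan p m (rmon p i j) bs * rprod p bs b :: 'k)"
    using False by (simp add: rP_def Lm_def)
  thus ?thesis using LD_P[OF p LL j] by simp
qed

lemma poly_Gm: "poly (Gm m :: 'k::field poly) 1 = of_nat m"
  by (simp add: Gm_def poly_sum poly_monom)

theorem theorem3p3:
  fixes p n :: nat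
  assumes "prime p"
    and "CHAR('k::alg_closed_field) = p"
    and "n > 0"
  shows "(radford_indicator p n :: 'k) = (if p dvd n then 0 else 1)"
proof -
  have pp: "prime p" and ch: "CHAR('k) = p" using assms by auto
  have p: "p \<ge> 2" using pp by (simp add: prime_ge_2_nat)
  obtain m where nm: "n = Suc m" using assms(3) by (cases n) auto
  let ?A = "\<lambda>j. monom 1 j * Gm m ^ j :: 'k poly"
  let ?E = "(\<Sum>i<p. monom 1 (n * i)) :: 'k poly"
  have "(radford_indicator p n :: 'k) = (\<Sum>i<p. \<Sum>j<p. rS p (rP p m (rmon p i j)) (i,j))"
    unfolding radford_indicator_def rtrace_def sum_rbasis nm by simp
  also have "\<dots> = (\<Sum>i<p. \<Sum>j<p. (-1)^j * coeff ((monom 1 (n * i) * ?A j) mod MM p) 0)"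
  proof (intro sum.cong refl)
    fix i j assume i: "i \<in> {..<p}" and j: "j \<in> {..<p}"
    have "rS p (rP p m (rmon p i j)) (i,j) = (-1)^j * coeff ((monom 1 (i + j) * (monom 1 (m * i) * Gm m ^ j)) mod MM p) (0::nat)"
      using i j by (intro rS_val[OF p LD_rP[OF p]]) auto
    also have "monom 1 (i + j) * (monom 1 (m * i) * Gm m ^ j) = monom 1 (n * i) * ?A j"
    proof -
      have ex: "i + j + m * i = n * i + j" using nm by simp
      have e1: "monom (1::'k) (i + j) * monom 1 (m * i) = monom 1 (n * i) * monom 1 j"
        unfolding mult_monom ex by simp
      show ?thesis by (simp only: mult.assoc[symmetric] e1)
    qed
    finally show "rS p (rP p m (rmon p i j)) (i,j) = (-1)^j * coeff ((monom 1 (n * i) * ?A j) mod MM p) 0" .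
  qed
  also have "\<dots> = (\<Sum>j<p. \<Sum>i<p. (-1)^j * coeff ((monom 1 (n * i) * ?A j) mod MM p) 0)"
    by (rule sum.swap)
  also have "\<dots> = (\<Sum>j<p. (-1)^j * coeff ((?E * ?A j) mod MM p) 0)"
  proof (rule sum.cong[OF refl])
    fix j
    show "(\<Sum>i<p. (-1)^j * coeff ((monom 1 (n * i) * ?A j) mod MM p) 0) = (-1)^j * coeff ((?E * ?A j) mod MM p) 0"
      unfolding sum_distrib_right[of "\<lambda>i. monom 1 (n * i)"] mod_sum_poly coeff_sum sum_distrib_left ..
  qed
  also have "\<dots> = (if p dvd n then 0 else 1)"
  proof (cases "p dvd n")
    case True
    have "(?E * ?A j) mod MM p = 0" for j
    proof -
      have "(?E * ?A j) mod MM p = ((?E mod MM p) * ?A j) mod MM p" by (rule mod_mult_left_eq[symmetric])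
      also have "\<dots> = 0" unfolding E_mod_dvd[OF pp True ch] by simp
      finally show ?thesis .
    qed
    thus ?thesis using True by (simp only: coeff_0 mult_zero_right sum.neutral_const if_True)
  next
    case False
    have "(?E * ?A j) mod MM p = smult (of_nat m ^ j) (E0 p)" for j
    proof -
      have "(?E * ?A j) mod MM p = ((?E mod MM p) * ?A j) mod MM p" by (rule mod_mult_left_eq[symmetric])
      also have "\<dots> = smult (poly (?A j) 1) (E0 p)" unfolding E_mod_ndvd[OF pp False] by (rule E0_mult[OF p])
      also have "poly (?A j) 1 = of_nat m ^ j" by (simp add: poly_Gm poly_monom)
      finally show ?thesis .
    qed
    hence "(\<Sum>j<p. (-1)^j * coeff ((?E * ?A j) mod MM p) 0) = (\<Sum>j<p. (- of_nat m :: 'k) ^ j)"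
    proof -
      assume h: "\<And>j. (?E * ?A j) mod MM p = smult (of_nat m ^ j) (E0 p)"
      have ce: "coeff (E0 p :: 'k poly) 0 = 1" using p by (intro coeff_E0) auto
      show ?thesis unfolding h coeff_smult ce mult_1_right power_minus[of "of_nat m :: 'k"] ..
    qed
    also have "\<dots> = 1" using geom_char[OF pp ch] False nm by simp
    finally show ?thesis using False by simp
  qed
  finally show ?thesis .
qed


end
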